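(* Suppose Assumptions A and C hold, and suppose that for every semidefinite face $\mathcal F$ of $\Gamma$, $$\dim(\mathcal V(\mathcal F))\ \ge\ \operatorname{affdim}(\{b(\gamma):\gamma\in\mathcal F\})+1.$$ Then $\operatorname{conv}(\mathcal D)=\mathcal D_{\mathrm{SDP}}$ and $\mathrm{Opt}=\mathrm{Opt}_{\mathrm{SDP}}$.
   Context: Fix integers $N\ge 1$, $m_I,m_E\ge 0$, $m:=m_I+m_E\ge 1$; $[a,b]=\{a,\dots,b\}$, $[n]=[1,n]$. For $i\in[0,m]$ let $q_i(x)=x^\top A_ix+2b_i^\top x+c_i$ with $A_i\in\mathbb S^N$, $b_i\in\mathbb R^N$, $c_i\in\mathbb R$. $\mathrm{Opt}:=\inf\{q_0(x): q_i(x)\le 0\ \forall i\in[m_I],\ q_i(x)=0\ \forall i\in[m_I+1,m]\}$; $\mathcal D:=\{(x,t)\in\mathbb R^N\times\mathbb R: q_0(x)\le 2t,\ q_i(x)\le0\ \forall i\in[m_I],\ q_i(x)=0\ \forall i\in[m_I+1,m]\}$. Let $Q_i=\begin{pmatrix}c_i& b_i^\top\\ b_i& A_i\end{pmatrix}$; $\mathrm{Opt}_{\mathrm{SDP}}:=\inf\{\langle Q_0,Y\rangle: Y=\begin{pmatrix}1&x^\top\\ x& X\end{pmatrix}\succeq 0,\ X\in\mathbb S^N,\ \langle Q_i,Y\rangle\le 0\ \forall i\in[m_I],\ \langle Q_i,Y\rangle=0\ \forall i\in[m_I+1,m]\}$ and $\mathcal D_{\mathrm{SDP}}:=\{(x,t):\exists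 X\in\mathbb S^N$ with $Y=\begin{pmatrix}1&x^\top\\ x& X\end{pmatrix}\succeq0$, $\langle Q_0,Y\rangle\le 2t$, and the same constraints$\}$. For $\gamma\in\mathbb R^m$: $A(\gamma)=A_0+\sum\gamma_iA_i$, $b(\gamma)=b_0+\sum\gamma_ib_i$; $\Gamma:=\{\gamma\in\mathbb R^m: A(\gamma)\succeq0,\ \gamma_i\ge0\ \forall i\in[m_I]\}$. Assumption A: the QCQP feasible set is nonempty and some $\gamma^*$ with $\gamma^*_i\ge0$ ($i\in[m_I]$) has $A(\gamma^* )\succ0$. Assumption C: $\Gamma$ is a polyhedron. A nonempty face $\mathcal F$ of $\Gamma$ is definite if some $\gamma\in\mathcal F$ has $A(\gamma)\succ0$, semidefinite otherwise; $\mathcal V(\mathcal F):=\{v\in\mathbb R^N: A(\gamma)v=0\ \forall \gamma\in\mathcal F\}$. $\operatorname{affdim}$ is the dimension of the affine hull. *)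

theory Defs
  imports "HOL-Analysis.Analysis"
begin

definition symm :: "real^'k^'k \<Rightarrow> bool" where
  "symm M \<longleftrightarrow> transpose M = M"

definition psd :: "real^'k^'k \<Rightarrow> bool" where
  "psd M \<longleftrightarrow> symm M \<and> (\<forall>z. 0 \<le> z \<bullet> (M *v z))"

definition pd :: "real^'k^'k \<Rightarrow> bool" where
  "pd M \<longleftrightarrow> symm M \<and> (\<forall>z. z \<noteq> 0 \<longrightarrow> 0 < z \<bullet> (M *v z))"

definition frob :: "real^'k^'k \<Rightarrow> real^'k^'k \<Rightarrow> real" where
  "frob M Y = (\<Sum>i\<in>UNIV. \<Sum>j\<in>UNIV. M$i$j * Y$i$j)"

text \<open>Block matrix [[c, b^T],[b, A]] of size (N+1)x(N+1); the extra index is None.\<close>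
definition blk :: "real \<Rightarrow> real^'n \<Rightarrow> real^'n^'n \<Rightarrow> real^('n option)^('n option)" where
  "blk c b A = (\<chi> i j. case i of
      None \<Rightarrow> (case j of None \<Rightarrow> c | Some j' \<Rightarrow> b$j')
    | Some i' \<Rightarrow> (case j of None \<Rightarrow> b$i' | Some j' \<Rightarrow> A$i'$j'))"

definition qf :: "real^'n^'n \<Rightarrow> real^'n \<Rightarrow> real \<Rightarrow> real^'n \<Rightarrow> real" where
  "qf A b c x = x \<bullet> (A *v x) + 2 * (b \<bullet> x) + c"

text \<open>Constraints are indexed by a finite type 'm (so m = CARD('m) >= 1);
  I is the set of inequality constraints, the rest are equality constraints.\<close>
definition qfeas ::
  "('m::finite \<Rightarrow> real^'n^'n) \<Rightarrow> ('m \<Rightarrow> real^'n) \<Rightarrow> ('m \<Rightarrow> real) \<Rightarrow> 'm set \<Rightarrow> real^'n \<Rightarrow> bool" where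
  "qfeas A b c I x \<longleftrightarrow> (\<forall>i\<in>I. qf (A i) (b i) (c i) x \<le> 0) \<and> (\<forall>i. i \<notin> I \<longrightarrow> qf (A i) (b i) (c i) x = 0)"

definition Opt ::
  "real^'n^'n \<Rightarrow> real^'n \<Rightarrow> real \<Rightarrow> ('m::finite \<Rightarrow> real^'n^'n) \<Rightarrow> ('m \<Rightarrow> real^'n) \<Rightarrow> ('m \<Rightarrow> real) \<Rightarrow> 'm set \<Rightarrow> ereal" where
  "Opt A0 b0 c0 A b c I = Inf {ereal (qf A0 b0 c0 x) | x. qfeas A b c I x}"

definition DD ::
  "real^'n^'n \<Rightarrow> real^'n \<Rightarrow> real \<Rightarrow> ('m::finite \<Rightarrow> real^'n^'n) \<Rightarrow> ('m \<Rightarrow> real^'n) \<Rightarrow> ('m \<Rightarrow> real) \<Rightarrow> 'm set \<Rightarrow> ((real^'n) \<times> real) set" where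
  "DD A0 b0 c0 A b c I = {(x, t). qf A0 b0 c0 x \<le> 2 * t \<and> qfeas A b c I x}"

definition sdpfeas ::
  "('m::finite \<Rightarrow> real^'n^'n) \<Rightarrow> ('m \<Rightarrow> real^'n) \<Rightarrow> ('m \<Rightarrow> real) \<Rightarrow> 'm set \<Rightarrow> real^'n \<Rightarrow> real^'n^'n \<Rightarrow> bool" where
  "sdpfeas A b c I x X \<longleftrightarrow> symm X \<and> psd (blk 1 x X) \<and>
     (\<forall>i\<in>I. frob (blk (c i) (b i) (A i)) (blk 1 x X) \<le> 0) \<and>
     (\<forall>i. i \<notin> I \<longrightarrow> frob (blk (c i) (b i) (A i)) (blk 1 x X) = 0)"

definition OptSDP ::
  "real^'n^'n \<Rightarrow> real^'n \<Rightarrow> real \<Rightarrow> ('m::finite \<Rightarrow> real^'n^'n) \<Rightarrow> ('m \<Rightarrow> real^'n) \<Rightarrow> ('m \<Rightarrow> real) \<Rightarrow> 'm set \<Rightarrow> ereal" where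
  "OptSDP A0 b0 c0 A b c I =
     Inf {ereal (frob (blk c0 b0 A0) (blk 1 x X)) | x X. sdpfeas A b c I x X}"

definition DSDP ::
  "real^'n^'n \<Rightarrow> real^'n \<Rightarrow> real \<Rightarrow> ('m::finite \<Rightarrow> real^'n^'n) \<Rightarrow> ('m \<Rightarrow> real^'n) \<Rightarrow> ('m \<Rightarrow> real) \<Rightarrow> 'm set \<Rightarrow> ((real^'n) \<times> real) set" where
  "DSDP A0 b0 c0 A b c I = {(x, t). \<exists>X. sdpfeas A b c I x X \<and> frob (blk c0 b0 A0) (blk 1 x X) \<le> 2 * t}"

definition Agam :: "real^'n^'n \<Rightarrow> ('m::finite \<Rightarrow> real^'n^'n) \<Rightarrow> real^'m \<Rightarrow> real^'n^'n" where
  "Agam A0 A g = A0 + (\<Sum>i\<in>UNIV. g$i *\<^sub>R A i)"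

definition bgam :: "real^'n \<Rightarrow> ('m::finite \<Rightarrow> real^'n) \<Rightarrow> real^'m \<Rightarrow> real^'n" where
  "bgam b0 b g = b0 + (\<Sum>i\<in>UNIV. g$i *\<^sub>R b i)"

definition Gam :: "real^'n^'n \<Rightarrow> ('m::finite \<Rightarrow> real^'n^'n) \<Rightarrow> 'm set \<Rightarrow> (real^'m) set" where
  "Gam A0 A I = {g. psd (Agam A0 A g) \<and> (\<forall>i\<in>I. 0 \<le> g$i)}"

definition semidef_face :: "real^'n^'n \<Rightarrow> ('m::finite \<Rightarrow> real^'n^'n) \<Rightarrow> 'm set \<Rightarrow> (real^'m) set \<Rightarrow> bool" where
  "semidef_face A0 A I F \<longleftrightarrow> F face_of Gam A0 A I \<and> F \<noteq> {} \<and> \<not> (\<exists>g\<in>F. pd (Agam A0 A g))"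

definition VF :: "real^'n^'n \<Rightarrow> ('m::finite \<Rightarrow> real^'n^'n) \<Rightarrow> (real^'m) set \<Rightarrow> (real^'n) set" where
  "VF A0 A F = {v. \<forall>g\<in>F. Agam A0 A g *v v = 0}"

end

theory Submission
  imports Defs
begin


lemma poly_rep:
  fixes S :: "'a::euclidean_space set"
  assumes "polyhedron S"
  shows "\<exists>K. finite K \<and> S = {x. \<forall>ab\<in>K. fst ab \<bullet> x \<le> snd ab}"
proof -
  obtain F where F: "finite F" "S = \<Inter> F" "\<forall>h\<in>F. \<exists>a b. a \<noteq> 0 \<and> h = {x. a \<bullet> x \<le> b}"
    using assms unfolding polyhedron_def by blast
  then have "\<forall>h\<in>F. \<exists>ab. h = {x. fst ab \<bullet> x \<le> snd ab}" by fastforce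
  then obtain f where f: "\<forall>h\<in>F. h = {x. fst (f h) \<bullet> x \<le> snd (f h)}" by metis
  show ?thesis
  proof (intro exI conjI)
    show "finite (f ` F)" using F by simp
    show "S = {x. \<forall>ab\<in>f ` F. fst ab \<bullet> x \<le> snd ab}"
      using F(2) f by auto
  qed
qed

lemma mink_cone:
  fixes G :: "'a::euclidean_space set"
  assumes G: "finite G"
  shows "\<exists>H. finite H \<and> {z. \<forall>g\<in>G. g \<bullet> z \<le> 0} = convex_cone hull H"
proof -
  define P where "P = convex_cone hull G"
  have "polyhedron P" unfolding P_def using G by (rule polyhedron_convex_cone_hull)
  then obtain K where K: "finite K" "P = {x. \<forall>ab\<in>K. fst ab \<bullet> x \<le> snd ab}"
    using poly_rep by blast
  define H where "H = fst ` K"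
  have conP: "conic P" unfolding P_def by (rule conic_convex_cone_hull)
  have zP: "0 \<in> P" unfolding P_def by (rule convex_cone_hull_contains_0)
  have Peq: "P = {y. \<forall>h\<in>H. h \<bullet> y \<le> 0}"
  proof safe
    fix y h assume y: "y \<in> P" and h: "h \<in> H"
    then obtain \<beta> where hb: "(h,\<beta>) \<in> K" unfolding H_def by force
    show "h \<bullet> y \<le> 0"
    proof (rule ccontr)
      assume "\<not> h \<bullet> y \<le> 0"
      then have pos: "h \<bullet> y > 0" by simp
      have b0: "0 \<le> \<beta>" using zP K(2) hb by fastforce
      define \<mu> where "\<mu> = (\<beta> + 1) / (h \<bullet> y)"
      have "\<mu> \<ge> 0" using pos b0 by (simp add: \<mu>_def)
      then have "\<mu> *\<^sub>R y \<in> P" using conP y by (simp add: conic_def)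
      then have "h \<bullet> (\<mu> *\<^sub>R y) \<le> \<beta>" using K(2) hb by fastforce
      moreover have "h \<bullet> (\<mu> *\<^sub>R y) = \<beta> + 1" using pos by (simp add: \<mu>_def)
      ultimately show False by simp
    qed
  next
    fix y assume "\<forall>h\<in>H. h \<bullet> y \<le> 0"
    moreover have "\<forall>ab\<in>K. snd ab \<ge> 0" using zP K(2) by fastforce
    ultimately show "y \<in> P" unfolding K(2) H_def by force
  qed
  show ?thesis
  proof (intro exI conjI)
    show "finite H" unfolding H_def using K by simp
    show "{z. \<forall>g\<in>G. g \<bullet> z \<le> 0} = convex_cone hull H"
    proof
      have HC: "H \<subseteq> {z. \<forall>g\<in>G. g \<bullet> z \<le> 0}"
      proof
        fix h assume h: "h \<in> H"
        { fix g assume "g \<in> G"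
          then have "g \<in> P" unfolding P_def by (simp add: hull_inc)
          then have "h \<bullet> g \<le> 0" using Peq h by blast
          then have "g \<bullet> h \<le> 0" by (simp add: inner_commute) }
        then show "h \<in> {z. \<forall>g\<in>G. g \<bullet> z \<le> 0}" by blast
      qed
      have "convex_cone {z. \<forall>g\<in>G. g \<bullet> z \<le> 0}"
        unfolding convex_cone_iff
        by (auto simp: inner_add_right intro: add_nonpos_nonpos mult_nonneg_nonpos)
      then show "convex_cone hull H \<subseteq> {z. \<forall>g\<in>G. g \<bullet> z \<le> 0}"
        using HC by (simp add: hull_minimal)
    next
      show "{z. \<forall>g\<in>G. g \<bullet> z \<le> 0} \<subseteq> convex_cone hull H"
      proof
        fix x assume x: "x \<in> {z. \<forall>g\<in>G. g \<bullet> z \<le> 0}"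
        show "x \<in> convex_cone hull H"
        proof (rule ccontr)
          assume nx: "x \<notin> convex_cone hull H"
          have "closed (convex_cone hull H)"
            using \<open>finite H\<close> by (rule closed_convex_cone_hull)
          then obtain w \<beta> where w: "w \<bullet> x < \<beta>" "\<forall>y\<in>convex_cone hull H. \<beta> < w \<bullet> y"
            using separating_hyperplane_closed_point[OF convex_convex_cone_hull _ nx] by blast
          have b0: "\<beta> < 0" using w(2) convex_cone_hull_contains_0 by fastforce
          have wh: "w \<bullet> h \<ge> 0" if h: "h \<in> H" for h
          proof (rule ccontr)
            assume "\<not> 0 \<le> w \<bullet> h"
            then have neg: "w \<bullet> h < 0" by simp
            define \<mu> where "\<mu> = \<beta> / (w \<bullet> h)"
            have "\<mu> \<ge> 0" using neg b0 by (simp add: \<mu>_def divide_nonpos_neg)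
            then have "\<mu> *\<^sub>R h \<in> convex_cone hull H"
              using conic_convex_cone_hull h hull_inc unfolding conic_def by metis
            then have "\<beta> < w \<bullet> (\<mu> *\<^sub>R h)" using w(2) by blast
            moreover have "w \<bullet> (\<mu> *\<^sub>R h) = \<beta>" using neg by (simp add: \<mu>_def)
            ultimately show False by simp
          qed
          have "-w \<in> P" unfolding Peq using wh by (simp add: inner_commute)
          moreover have "convex_cone {y. y \<bullet> x \<le> 0}"
            unfolding convex_cone_iff
            by (auto simp: inner_add_left intro: add_nonpos_nonpos mult_nonneg_nonpos)
          moreover have "G \<subseteq> {y. y \<bullet> x \<le> 0}" using x by auto
          ultimately have "(-w) \<bullet> x \<le> 0" unfolding P_def using hull_minimal by blast
          then show False using w(1) b0 by simp
        qed
      qed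
    qed
  qed
qed


lemma decomp:
  fixes S :: "'a::euclidean_space set"
  assumes "polyhedron S" "S \<noteq> {}"
  shows "\<exists>U T. finite U \<and> finite T \<and> U \<noteq> {} \<and> U \<subseteq> S \<and>
     (\<forall>x\<in>S. \<forall>t\<in>T. \<forall>\<mu>\<ge>0. x + \<mu> *\<^sub>R t \<in> S) \<and>
     (\<forall>x\<in>S. \<exists>u\<in>convex hull U. \<exists>w\<in>convex_cone hull T. x = u + w)"
proof -
  obtain K where K: "finite K" "S = {x. \<forall>ab\<in>K. fst ab \<bullet> x \<le> snd ab}"
    using poly_rep assms(1) by blast
  define G :: "('a \<times> real) set" where "G = insert (0, -1) ((\<lambda>ab. (fst ab, - snd ab)) ` K)"
  have "finite G" unfolding G_def using K by simp
  then obtain H where H: "finite H" "{z. \<forall>g\<in>G. g \<bullet> z \<le> 0} = convex_cone hull H"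
    using mink_cone by blast
  have Cmem: "z \<in> convex_cone hull H \<longleftrightarrow> snd z \<ge> 0 \<and> (\<forall>ab\<in>K. fst ab \<bullet> fst z - snd ab * snd z \<le> 0)" for z
    unfolding H(2)[symmetric] G_def by (cases z) (auto simp: inner_Pair)
  have HC: "h \<in> H \<Longrightarrow> h \<in> convex_cone hull H" for h by (simp add: hull_inc)
  define U where "U = (\<lambda>h. (1 / snd h) *\<^sub>R fst h) ` {h\<in>H. snd h > 0}"
  define T where "T = fst ` {h\<in>H. snd h = 0}"
  define Q where "Q = {z. (snd z > 0 \<and> (\<exists>u\<in>convex hull U. \<exists>w\<in>convex_cone hull T. fst z = snd z *\<^sub>R u + w))
                     \<or> (snd z = 0 \<and> fst z \<in> convex_cone hull T)}"
  have Qi: "z \<in> Q" if "snd z > 0" "u \<in> convex hull U" "w \<in> convex_cone hull T" "fst z = snd z *\<^sub>R u + w" for z u w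
    unfolding Q_def using that by blast
  have cQ: "convex_cone Q"
    unfolding convex_cone_iff
  proof (intro conjI ballI allI impI)
    show "0 \<in> Q" unfolding Q_def by (simp add: convex_cone_hull_contains_0)
  next
    fix z1 z2 assume z1: "z1 \<in> Q" and z2: "z2 \<in> Q"
    show "z1 + z2 \<in> Q"
    proof (cases "snd z1 > 0")
      case True
      then obtain u1 w1 where u1: "u1 \<in> convex hull U" "w1 \<in> convex_cone hull T" "fst z1 = snd z1 *\<^sub>R u1 + w1"
        using z1 unfolding Q_def by auto
      show ?thesis
      proof (cases "snd z2 > 0")
        case True2: True
        then obtain u2 w2 where u2: "u2 \<in> convex hull U" "w2 \<in> convex_cone hull T" "fst z2 = snd z2 *\<^sub>R u2 + w2"
          using z2 unfolding Q_def by auto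
        define s where "s = snd z1 + snd z2"
        have s0: "s > 0" using True True2 by (simp add: s_def)
        define u where "u = (snd z1 / s) *\<^sub>R u1 + (snd z2 / s) *\<^sub>R u2"
        have "u \<in> convex hull U" unfolding u_def
          apply (rule convexD[OF convex_convex_hull u1(1) u2(1)])
          using True True2 s0 by (auto simp: s_def add_divide_distrib[symmetric])
        moreover have "w1 + w2 \<in> convex_cone hull T" using u1(2) u2(2) by (rule convex_cone_hull_add)
        moreover have su: "s *\<^sub>R u = snd z1 *\<^sub>R u1 + snd z2 *\<^sub>R u2"
          using s0 by (simp add: u_def scaleR_add_right)
        moreover have "fst (z1 + z2) = snd (z1 + z2) *\<^sub>R u + (w1 + w2)"
          using u1(3) u2(3) su by (simp add: s_def algebra_simps)
        ultimately have "snd (z1 + z2) > 0 \<and> (\<exists>u\<in>convex hull U. \<exists>w\<in>convex_cone hull T. fst (z1 + z2) = snd (z1 + z2) *\<^sub>R u + w)"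
          using s0 unfolding s_def by (metis snd_add)
        then show ?thesis unfolding Q_def by blast
      next
        case False
        then have "snd z2 = 0" "fst z2 \<in> convex_cone hull T" using z2 unfolding Q_def by auto
        then show ?thesis using u1 True
          by (intro Qi[of _ u1 "w1 + fst z2"]) (auto intro: convex_cone_hull_add)
      qed
    next
      case False
      then have z1': "snd z1 = 0" "fst z1 \<in> convex_cone hull T" using z1 unfolding Q_def by auto
      show ?thesis
      proof (cases "snd z2 > 0")
        case True2: True
        then obtain u2 w2 where u2: "u2 \<in> convex hull U" "w2 \<in> convex_cone hull T" "fst z2 = snd z2 *\<^sub>R u2 + w2"
          using z2 unfolding Q_def by auto
        then show ?thesis using z1' True2
          by (intro Qi[of _ u2 "fst z1 + w2"]) (auto intro: convex_cone_hull_add)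
      next
        case False
        then have "snd z2 = 0" "fst z2 \<in> convex_cone hull T" using z2 unfolding Q_def by auto
        then show ?thesis using z1' unfolding Q_def by (auto intro: convex_cone_hull_add)
      qed
    qed
  next
    fix z and c :: real assume z: "z \<in> Q" and c: "0 \<le> c"
    show "c *\<^sub>R z \<in> Q"
    proof (cases "c = 0")
      case True then show ?thesis unfolding Q_def by (simp add: convex_cone_hull_contains_0)
    next
      case False
      then have c0: "c > 0" using c by simp
      show ?thesis
      proof (cases "snd z > 0")
        case True
        then obtain u w where u: "u \<in> convex hull U" "w \<in> convex_cone hull T" "fst z = snd z *\<^sub>R u + w"
          using z unfolding Q_def by auto
        then show ?thesis using c0 True
          by (intro Qi[of _ u "c *\<^sub>R w"]) (auto intro: convex_cone_hull_mul simp: scaleR_add_right)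
      next
        case False
        then have "snd z = 0" "fst z \<in> convex_cone hull T" using z unfolding Q_def by auto
        then show ?thesis unfolding Q_def using c by (auto intro: convex_cone_hull_mul)
      qed
    qed
  qed
  have HQ: "H \<subseteq> Q"
  proof
    fix h assume h: "h \<in> H"
    then have hs: "snd h \<ge> 0" using Cmem HC by blast
    show "h \<in> Q"
    proof (cases "snd h > 0")
      case True
      have "(1 / snd h) *\<^sub>R fst h \<in> U" unfolding U_def using h True by auto
      then have "(1 / snd h) *\<^sub>R fst h \<in> convex hull U" by (simp add: hull_inc)
      moreover have "fst h = snd h *\<^sub>R ((1 / snd h) *\<^sub>R fst h) + 0" using True by simp
      ultimately show ?thesis unfolding Q_def using True convex_cone_hull_contains_0 by blast
    next
      case False
      then have "snd h = 0" using hs by simp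
      then have "fst h \<in> T" unfolding T_def using h by auto
      then show ?thesis unfolding Q_def using \<open>snd h = 0\<close> by (simp add: hull_inc)
    qed
  qed
  have CQ: "convex_cone hull H \<subseteq> Q" using HQ cQ by (simp add: hull_minimal)
  show ?thesis
  proof (intro exI conjI)
    show "finite U" unfolding U_def using H(1) by simp
    show "finite T" unfolding T_def using H(1) by simp
    show rep: "\<forall>x\<in>S. \<exists>u\<in>convex hull U. \<exists>w\<in>convex_cone hull T. x = u + w"
    proof
      fix x assume "x \<in> S"
      then have "(x, 1) \<in> convex_cone hull H" unfolding Cmem using K(2) by auto
      then have "(x, 1::real) \<in> Q" using CQ by blast
      then show "\<exists>u\<in>convex hull U. \<exists>w\<in>convex_cone hull T. x = u + w" unfolding Q_def by auto
    qed
    show "U \<noteq> {}"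
    proof
      assume "U = {}"
      obtain x where "x \<in> S" using assms(2) by blast
      then show False using rep \<open>U = {}\<close> by auto
    qed
    show "U \<subseteq> S"
    proof
      fix u assume "u \<in> U"
      then obtain h where h: "h \<in> H" "snd h > 0" "u = (1 / snd h) *\<^sub>R fst h" unfolding U_def by auto
      then have "\<forall>ab\<in>K. fst ab \<bullet> fst h - snd ab * snd h \<le> 0" using Cmem HC by blast
      then have "\<forall>ab\<in>K. fst ab \<bullet> u \<le> snd ab" using h(2,3)
        by (auto simp: divide_simps mult.commute)
      then show "u \<in> S" using K(2) by simp
    qed
    show "\<forall>x\<in>S. \<forall>t\<in>T. \<forall>\<mu>\<ge>0. x + \<mu> *\<^sub>R t \<in> S"
    proof (intro ballI allI impI)
      fix x t and \<mu> :: real assume x: "x \<in> S" and t: "t \<in> T" and mu: "0 \<le> \<mu>"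
      then obtain h where h: "h \<in> H" "snd h = 0" "t = fst h" unfolding T_def by auto
      have "h \<in> convex_cone hull H" using h(1) HC by blast
      then have "\<forall>ab\<in>K. fst ab \<bullet> t \<le> 0" unfolding Cmem using h(2,3) by simp
      then have "\<forall>ab\<in>K. fst ab \<bullet> (x + \<mu> *\<^sub>R t) \<le> snd ab" using x K(2) mu
        by (auto simp: inner_add_right) (smt (verit, best) fst_conv mult_nonneg_nonpos snd_conv)
      then show "x + \<mu> *\<^sub>R t \<in> S" using K(2) by simp
    qed
  qed
qed

lemma affine_le0:
  fixes S :: "'a::euclidean_space set"
  assumes "\<forall>x\<in>S. \<exists>u\<in>convex hull U. \<exists>w\<in>convex_cone hull T. x = u + w"
    and "\<forall>u\<in>U. c + l \<bullet> u \<le> 0" and "\<forall>t\<in>T. l \<bullet> t \<le> 0" and "x \<in> S"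
  shows "c + l \<bullet> x \<le> 0"
proof -
  obtain u w where uw: "u \<in> convex hull U" "w \<in> convex_cone hull T" "x = u + w" using assms by blast
  have "convex {u. c + l \<bullet> u \<le> 0}" by (simp add: convex_halfspace_le[of l "-c", simplified] add.commute[of c] le_diff_eq[symmetric] )
  have c1: "convex {u. l \<bullet> u \<le> - c}" by (rule convex_halfspace_le)
  have "U \<subseteq> {u. l \<bullet> u \<le> - c}" using assms(2) by force
  then have "c + l \<bullet> u \<le> 0" using uw(1) c1 hull_minimal[of U "{u. l \<bullet> u \<le> - c}" convex] by force
  moreover have "convex_cone {u. l \<bullet> u \<le> 0}"
    unfolding convex_cone_iff by (auto simp: inner_add_right intro: mult_nonneg_nonpos)
  then have "l \<bullet> w \<le> 0" using uw(2) assms(3) hull_minimal[of T "{u. l \<bullet> u \<le> 0}" convex_cone] by force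
  ultimately show ?thesis using uw(3) by (simp add: inner_add_right)
qed


lemma inner_mv: "z \<bullet> (M *v w) = (\<Sum>i\<in>UNIV. \<Sum>j\<in>UNIV. z$i * M$i$j * w$j)"
  by (simp add: inner_vec_def matrix_vector_mult_def sum_distrib_left mult.assoc)

lemma symm_iff: "symm M \<longleftrightarrow> (\<forall>i j. M$i$j = M$j$i)"
  unfolding symm_def transpose_def by (auto simp: vec_eq_iff)

lemma symm_swap: "symm M \<Longrightarrow> v \<bullet> (M *v x) = x \<bullet> (M *v v)"
  unfolding inner_mv symm_iff
  apply (subst sum.swap)
  by (auto intro!: sum.cong simp: mult.commute mult.left_commute)

lemma qf_line: "qf M bb cc (x + s *\<^sub>R v) = qf M bb cc x + s * (x \<bullet> (M *v v) + v \<bullet> (M *v x) + 2 * (bb \<bullet> v)) + s^2 * (v \<bullet> (M *v v))"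
  unfolding qf_def
  by (simp add: matrix_vector_right_distrib matrix_vector_mult_scaleR inner_add_left inner_add_right algebra_simps power2_eq_square)

lemma sum_mv: "(\<Sum>k\<in>S. f k) *v v = (\<Sum>k\<in>S. f k *v v)"
  by (induction S rule: infinite_finite_induct) (auto simp: matrix_vector_mult_add_rdistrib)

lemma Agam_mv: "Agam A0 A g *v v = A0 *v v + (\<Sum>k\<in>UNIV. g$k *\<^sub>R (A k *v v))"
  unfolding Agam_def by (simp add: matrix_vector_mult_add_rdistrib sum_mv scaleR_matrix_vector_assoc)

lemma Agam_comp: "Agam A0 A g $i$j = A0$i$j + (\<Sum>k\<in>UNIV. g$k * A k $i$j)"
  unfolding Agam_def by simp

lemma symm_Agam: "symm A0 \<Longrightarrow> (\<forall>k. symm (A k)) \<Longrightarrow> symm (Agam A0 A g)"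
  unfolding symm_iff Agam_comp by auto

lemma qf_agg: "qf A0 b0 c0 y + (\<Sum>k\<in>UNIV. g$k * qf (A k) (b k) (c k) y)
   = qf (Agam A0 A g) (bgam b0 b g) (c0 + (\<Sum>k\<in>UNIV. g$k * c k)) y"
  unfolding qf_def Agam_mv bgam_def
  by (simp add: inner_add_left inner_add_right inner_sum_left inner_sum_right sum_distrib_left
     sum.distrib algebra_simps)


definition outer :: "real^'n \<Rightarrow> real^'n^'n" where "outer w = (\<chi> i j. w$i * w$j)"

lemma mv_axis: "(M *v axis j b)$i = M$i$j*b"
  unfolding matrix_vector_mult_def axis_def
  by (simp add: if_distrib[of "\<lambda>x. M$i$_ * x"] cong: if_cong)

lemma axis_inner: "axis i a \<bullet> (v::real^'n) = a * v$i"
  unfolding inner_vec_def axis_def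
  by (simp add: if_distrib[of "\<lambda>x. x * v$_"] cong: if_cong)

lemma axis_mv_axis: "axis i a \<bullet> (M *v axis j b) = a * b * M$i$j"
  by (simp add: axis_inner mv_axis)

lemma quad_outer: "(z::real^'n) \<bullet> (outer w *v z) = (w \<bullet> z)^2"
  unfolding inner_mv power2_eq_square inner_vec_def outer_def
  by (simp add: sum_product algebra_simps matrix_vector_mult_def sum_distrib_left)

lemma frob_outer: "frob M (outer w) = w \<bullet> (M *v w)"
  unfolding inner_mv outer_def frob_def by (simp add: algebra_simps)

lemma frob_diff: "frob M (P - Q) = frob M P - frob M Q"
  unfolding frob_def by (simp add: algebra_simps sum_subtractf)

lemma psd_diag: "psd P \<Longrightarrow> P$i$i \<ge> 0"
  unfolding psd_def using axis_mv_axis[of i 1 P i 1] by (metis mult_1)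

lemma quad_two: "i \<noteq> j \<Longrightarrow> (axis i a + axis j b) \<bullet> (P *v (axis i a + axis j b))
   = a*a*P$i$i + a*b*(P$i$j + P$j$i) + b*b*P$j$j"
  by (simp add: matrix_vector_right_distrib inner_add_left inner_add_right axis_mv_axis algebra_simps)

lemma lin_nonneg_zero:
  fixes p q :: real
  assumes "\<forall>t. 0 \<le> t * p + q" shows "p = 0"
proof (rule ccontr)
  assume "p \<noteq> 0"
  then have "0 \<le> (-(\<bar>q\<bar>+1)/p) * p + q" using assms by blast
  with \<open>p \<noteq> 0\<close> show False by (simp add: abs_if split: if_splits)
qed

lemma psd_diag_zero:
  assumes "psd P" "P$i$i = 0" shows "P$i$j = 0"
proof (cases "i = j")
  case True then show ?thesis using assms by simp
next
  case False
  have "\<forall>t. 0 \<le> t * (P$i$j + P$j$i) + P$j$j"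
  proof
    fix t
    have "0 \<le> (axis i t + axis j 1) \<bullet> (P *v (axis i t + axis j 1))" using assms(1) unfolding psd_def by blast
    then show "0 \<le> t * (P$i$j + P$j$i) + P$j$j" using quad_two[OF False, of t 1 P] assms(2) by simp
  qed
  then have "P$i$j + P$j$i = 0" by (rule lin_nonneg_zero)
  moreover have "P$i$j = P$j$i" using assms(1) unfolding psd_def symm_iff by blast
  ultimately show ?thesis by simp
qed

lemma psd_cs:
  assumes "psd P"
  shows "(x \<bullet> (P *v y))^2 \<le> (x \<bullet> (P *v x)) * (y \<bullet> (P *v y))"
proof -
  have sym: "y \<bullet> (P *v x) = x \<bullet> (P *v y)" using assms unfolding psd_def by (simp add: symm_swap)
  have q: "0 \<le> (x \<bullet> (P *v x)) + 2 * t * (x \<bullet> (P *v y)) + t^2 * (y \<bullet> (P *v y))" for t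
  proof -
    have "0 \<le> (x + t *\<^sub>R y) \<bullet> (P *v (x + t *\<^sub>R y))" using assms unfolding psd_def by blast
    then show ?thesis using sym
      by (simp add: matrix_vector_right_distrib matrix_vector_mult_scaleR inner_add_left inner_add_right algebra_simps power2_eq_square)
  qed
  show ?thesis
  proof (cases "y \<bullet> (P *v y) = 0")
    case True
    have "\<forall>t. 0 \<le> t * (2 * (x \<bullet> (P *v y))) + x \<bullet> (P *v x)" using q True by (simp add: algebra_simps)
    then have "x \<bullet> (P *v y) = 0" using lin_nonneg_zero by fastforce
    then show ?thesis using True by simp
  next
    case False
    then have pos: "y \<bullet> (P *v y) > 0" using assms unfolding psd_def by (simp add: order_less_le)
    define t where "t = - (x \<bullet> (P *v y)) / (y \<bullet> (P *v y))"
    have "0 \<le> (x \<bullet> (P *v x)) + 2 * t * (x \<bullet> (P *v y)) + t^2 * (y \<bullet> (P *v y))" by (rule q)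
    also have "\<dots> = (x \<bullet> (P *v x)) - (x \<bullet> (P *v y))^2 / (y \<bullet> (P *v y))"
      using pos by (simp add: t_def power2_eq_square field_simps)
    finally show ?thesis using pos by (simp add: field_simps)
  qed
qed

lemma frob_psd_nonneg_aux:
  "\<forall>P. psd (P::real^'n^'n) \<and> card {i. \<exists>j. P$i$j \<noteq> 0} = n \<longrightarrow> frob M P \<ge> 0"
  if psdM: "psd M"
proof (induction n rule: less_induct)
  case (less n)
  show ?case
  proof (intro allI impI)
    fix P :: "real^'n^'n" assume Pn: "psd P \<and> card {i. \<exists>j. P$i$j \<noteq> 0} = n"
    show "frob M P \<ge> 0"
    proof (cases "{i. \<exists>j. P$i$j \<noteq> 0} = {}")
      case True
      then have "P = 0" by (auto simp: vec_eq_iff)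
      then show ?thesis by (simp add: frob_def)
    next
      case False
      then obtain i j0 where ij: "P$i$j0 \<noteq> 0" by blast
      have psdP: "psd P" using Pn by blast
      have pii: "P$i$i > 0" using psd_diag[OF psdP, of i] psd_diag_zero[OF psdP, of i j0] ij by linarith
      define w where "w = (1 / sqrt (P$i$i)) *\<^sub>R (\<chi> k. P$k$i)"
      define P' where "P' = P - outer w"
      have wcomp: "w$k * w$l = P$k$i * P$l$i / P$i$i" for k l
        using pii by (simp add: w_def real_sqrt_mult[symmetric] power2_eq_square[symmetric] divide_simps)
      have symP: "\<forall>k l. P$k$l = P$l$k" using psdP unfolding psd_def symm_iff by blast
      have psdP': "psd P'"
        unfolding psd_def
      proof
        show "symm P'" unfolding symm_iff P'_def outer_def using symP by (simp add: mult.commute)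
        show "\<forall>z. 0 \<le> z \<bullet> (P' *v z)"
        proof
          fix z
          have e: "w \<bullet> z = (z \<bullet> (P *v axis i 1)) / sqrt (P$i$i)"
            unfolding w_def inner_mv by (simp add: inner_vec_def axis_def sum_divide_distrib mult.commute if_distrib cong: if_cong)
          have cs: "(z \<bullet> (P *v axis i 1))^2 \<le> (z \<bullet> (P *v z)) * P$i$i"
            using psd_cs[OF psdP, of z "axis i 1"] axis_mv_axis[of i 1 P i 1] by simp
          have "z \<bullet> (P' *v z) = z \<bullet> (P *v z) - (w \<bullet> z)^2"
            unfolding P'_def by (simp add: matrix_vector_mult_diff_rdistrib inner_diff_right quad_outer)
          also have "\<dots> = z \<bullet> (P *v z) - (z \<bullet> (P *v axis i 1))^2 / P$i$i"
            using pii by (simp add: e power_divide)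
          finally have "P$i$i * (z \<bullet> (P' *v z)) \<ge> 0" using cs pii by (simp add: field_simps)
          then show "0 \<le> z \<bullet> (P' *v z)" using pii by (simp add: zero_le_mult_iff)
        qed
      qed
      have sub: "{k. \<exists>l. P'$k$l \<noteq> 0} \<subseteq> {k. \<exists>l. P$k$l \<noteq> 0} - {i}"
      proof
        fix k assume "k \<in> {k. \<exists>l. P'$k$l \<noteq> 0}"
        then obtain l where l: "P'$k$l \<noteq> 0" by blast
        have "k \<noteq> i"
        proof
          assume "k = i"
          then have "P'$k$l = 0" unfolding P'_def outer_def using wcomp[of i l] pii symP by simp
          then show False using l by simp
        qed
        moreover have "\<exists>l. P$k$l \<noteq> 0"
        proof (rule ccontr)
          assume "\<not> (\<exists>l. P$k$l \<noteq> 0)"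
          then have "P$k$i = 0" by simp
          then have "P'$k$l = 0" unfolding P'_def outer_def using wcomp[of k l] \<open>\<not> (\<exists>l. P$k$l \<noteq> 0)\<close> by simp
          then show False using l by simp
        qed
        ultimately show "k \<in> {k. \<exists>l. P$k$l \<noteq> 0} - {i}" by blast
      qed
      have "card {k. \<exists>l. P'$k$l \<noteq> 0} < n"
      proof -
        have "card {k. \<exists>l. P'$k$l \<noteq> 0} \<le> card ({k. \<exists>l. P$k$l \<noteq> 0} - {i})" using sub by (simp add: card_mono)
        also have "\<dots> < card {k. \<exists>l. P$k$l \<noteq> 0}" using ij by (intro card_Diff1_less) auto
        finally show ?thesis using Pn by simp
      qed
      then have "frob M P' \<ge> 0" using less psdP' by blast
      moreover have "frob M P = frob M P' + w \<bullet> (M *v w)"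
        unfolding P'_def frob_diff frob_outer by simp
      moreover have "w \<bullet> (M *v w) \<ge> 0" using psdM unfolding psd_def by blast
      ultimately show ?thesis by simp
    qed
  qed
qed

lemma frob_psd_nonneg: "psd M \<Longrightarrow> psd P \<Longrightarrow> frob M P \<ge> 0"
  using frob_psd_nonneg_aux by blast


lemma sum_option: "(\<Sum>i\<in>(UNIV::'a::finite option set). f i) = f None + (\<Sum>i\<in>UNIV. f (Some i))"
proof -
  have "(UNIV::'a option set) = insert None (Some ` UNIV)" by (rule UNIV_option_conv)
  then have "(\<Sum>i\<in>(UNIV::'a option set). f i) = (\<Sum>i\<in>insert None (Some ` UNIV). f i)" by simp
  also have "\<dots> = f None + (\<Sum>i\<in>Some ` UNIV. f i)" by (subst sum.insert) auto
  also have "(\<Sum>i\<in>Some ` UNIV. f i) = (\<Sum>i\<in>UNIV. f (Some i))" by (subst sum.reindex) auto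
  finally show ?thesis .
qed

lemma frob_blk: "frob (blk c bb M) (blk 1 x X) = c + 2 * (bb \<bullet> x) + frob M X"
  unfolding frob_def blk_def sum_option
  by (simp add: sum.distrib inner_vec_def algebra_simps sum_distrib_left)

lemma quad_blk:
  fixes w :: "real^('n::finite option)"
  shows "w \<bullet> (blk c bb M *v w) = c * (w$None)^2 + 2 * w$None * (bb \<bullet> (\<chi> j. w$(Some j)))
     + (\<chi> j. w$(Some j)) \<bullet> (M *v (\<chi> j. w$(Some j)))"
proof -
  have "w \<bullet> (blk c bb M *v w) = (\<Sum>i\<in>UNIV. \<Sum>j\<in>UNIV. w$i * blk c bb M$i$j * w$j)" by (rule inner_mv)
  also have "\<dots> = w$None*c*w$None + (\<Sum>j\<in>UNIV. w$None * bb$j * w$(Some j))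
     + (\<Sum>i\<in>UNIV. w$(Some i)*bb$i*w$None + (\<Sum>j\<in>UNIV. w$(Some i) * M$i$j * w$(Some j)))"
    by (simp only: sum_option blk_def vec_lambda_beta option.case)
  also have "\<dots> = w$None*c*w$None + (\<Sum>j\<in>UNIV. w$None * bb$j * w$(Some j))
     + (\<Sum>i\<in>UNIV. w$(Some i)*bb$i*w$None) + (\<Sum>i\<in>UNIV. \<Sum>j\<in>UNIV. w$(Some i) * M$i$j * w$(Some j))"
    by (simp only: sum.distrib add.assoc)
  also have "(\<Sum>j\<in>UNIV. w$None * bb$j * w$(Some j)) = w$None * (bb \<bullet> (\<chi> j. w$(Some j)))"
    by (simp add: inner_vec_def sum_distrib_left mult.assoc)
  also have "(\<Sum>i\<in>UNIV. w$(Some i)*bb$i*w$None) = w$None * (bb \<bullet> (\<chi> j. w$(Some j)))"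
    by (simp add: inner_vec_def sum_distrib_left mult.commute mult.left_commute)
  also have "(\<Sum>i\<in>UNIV. \<Sum>j\<in>UNIV. w$(Some i) * M$i$j * w$(Some j)) = (\<chi> j. w$(Some j)) \<bullet> (M *v (\<chi> j. w$(Some j)))"
    by (simp add: inner_mv)
  finally show ?thesis by (simp add: power2_eq_square)
qed

lemma frob_split: "frob M X = x \<bullet> (M *v x) + frob M (X - outer x)"
  by (simp add: frob_diff frob_outer)

lemma psd_schur:
  assumes "psd (blk 1 x X)" "symm X"
  shows "psd (X - outer x)"
  unfolding psd_def
proof
  show "symm (X - outer x)" using assms(2) unfolding symm_iff outer_def by (simp add: mult.commute)
  show "\<forall>z. 0 \<le> z \<bullet> ((X - outer x) *v z)"
  proof
    fix z :: "real^'a"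
    define w :: "real^'a option" where "w = (\<chi> i. case i of None \<Rightarrow> - (x \<bullet> z) | Some j \<Rightarrow> z$j)"
    have wz: "(\<chi> j. w$(Some j)) = z" by (simp add: w_def vec_eq_iff)
    have "0 \<le> w \<bullet> (blk 1 x X *v w)" using assms(1) unfolding psd_def by blast
    also have "\<dots> = z \<bullet> (X *v z) - (x \<bullet> z)^2"
      unfolding quad_blk wz by (simp add: w_def power2_eq_square)
    also have "\<dots> = z \<bullet> ((X - outer x) *v z)"
      by (simp add: matrix_vector_mult_diff_rdistrib inner_diff_right quad_outer)
    finally show "0 \<le> z \<bullet> ((X - outer x) *v z)" .
  qed
qed

lemma frob_Agam: "frob (Agam A0 A g) P = frob A0 P + (\<Sum>k\<in>UNIV. g$k * frob (A k) P)"
proof -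
  have "frob (Agam A0 A g) P = frob A0 P + (\<Sum>i\<in>UNIV. \<Sum>j\<in>UNIV. \<Sum>k\<in>UNIV. g$k * A k $i$j * P$i$j)"
    unfolding frob_def Agam_comp by (simp add: distrib_right sum.distrib sum_distrib_right)
  also have "(\<Sum>i\<in>UNIV. \<Sum>j\<in>UNIV. \<Sum>k\<in>UNIV. g$k * A k $i$j * P$i$j)
      = (\<Sum>i\<in>UNIV. \<Sum>k\<in>UNIV. \<Sum>j\<in>UNIV. g$k * A k $i$j * P$i$j)"
    by (rule sum.cong[OF refl], rule sum.swap)
  also have "\<dots> = (\<Sum>k\<in>UNIV. \<Sum>i\<in>UNIV. \<Sum>j\<in>UNIV. g$k * A k $i$j * P$i$j)"
    by (rule sum.swap)
  also have "\<dots> = (\<Sum>k\<in>UNIV. g$k * frob (A k) P)"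
    unfolding frob_def by (simp add: sum_distrib_left mult.assoc)
  finally show ?thesis .
qed

locale qc =
  fixes A0 :: "real^'n^'n" and b0 :: "real^'n" and c0 :: real
    and A :: "'m::finite \<Rightarrow> real^'n^'n" and b :: "'m \<Rightarrow> real^'n" and c :: "'m \<Rightarrow> real"
    and I :: "'m set"
  assumes symA0: "symm A0" and symA: "\<forall>i. symm (A i)"
begin

definition Lv where "Lv x = (\<chi> k. qf (A k) (b k) (c k) x)"
definition fq where "fq g x = qf A0 b0 c0 x + Lv x \<bullet> g"
abbreviation G where "G \<equiv> Gam A0 A I"
definition S where "S = {p. \<forall>g\<in>G. fq g (fst p) \<le> 2 * snd p}"
definition Z where "Z p = {g\<in>G. fq g (fst p) = 2 * snd p}"

lemma Lv_inner: "Lv x \<bullet> g = (\<Sum>k\<in>UNIV. g$k * qf (A k) (b k) (c k) x)"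
  unfolding Lv_def inner_vec_def by (simp add: mult.commute)

lemma fq_agg: "fq g x = qf (Agam A0 A g) (bgam b0 b g) (c0 + (\<Sum>k\<in>UNIV. g$k * c k)) x"
  unfolding fq_def Lv_inner qf_agg ..

lemma DSDP_sub_S: "DSDP A0 b0 c0 A b c I \<subseteq> S"
proof
  fix p assume "p \<in> DSDP A0 b0 c0 A b c I"
  then obtain x t X where p: "p = (x, t)" and feas: "sdpfeas A b c I x X"
     and obj: "frob (blk c0 b0 A0) (blk 1 x X) \<le> 2 * t"
    unfolding DSDP_def by auto
  define P where "P = X - outer x"
  have psdP: "psd P" unfolding P_def using feas psd_schur unfolding sdpfeas_def by blast
  have fr: "frob (blk cc bb M) (blk 1 x X) = qf M bb cc x + frob M P" for cc bb M
    unfolding frob_blk P_def qf_def using frob_split[of M X x] by simp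
  show "p \<in> S" unfolding S_def p
  proof (clarsimp)
    fix g assume g: "g \<in> G"
    have t1: "g$k * frob (blk (c k) (b k) (A k)) (blk 1 x X) \<le> 0" for k
    proof (cases "k \<in> I")
      case True
      then have "0 \<le> g$k" using g unfolding Gam_def by blast
      moreover have "frob (blk (c k) (b k) (A k)) (blk 1 x X) \<le> 0" using feas True unfolding sdpfeas_def by blast
      ultimately show ?thesis by (simp add: mult_nonneg_nonpos)
    next
      case False
      then show ?thesis using feas unfolding sdpfeas_def by simp
    qed
    have "(\<Sum>k\<in>UNIV. g$k * frob (blk (c k) (b k) (A k)) (blk 1 x X)) \<le> 0"
      using t1 by (simp add: sum_nonpos)
    then have "frob (blk c0 b0 A0) (blk 1 x X) + (\<Sum>k\<in>UNIV. g$k * frob (blk (c k) (b k) (A k)) (blk 1 x X)) \<le> 2 * t"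
      using obj by linarith
    also have "frob (blk c0 b0 A0) (blk 1 x X) + (\<Sum>k\<in>UNIV. g$k * frob (blk (c k) (b k) (A k)) (blk 1 x X))
       = fq g x + frob (Agam A0 A g) P"
      unfolding fr fq_def Lv_inner frob_Agam by (simp add: algebra_simps sum.distrib)
    finally have "fq g x + frob (Agam A0 A g) P \<le> 2 * t" .
    moreover have "frob (Agam A0 A g) P \<ge> 0"
      using frob_psd_nonneg[OF _ psdP] g unfolding Gam_def by blast
    ultimately show "fq g x \<le> 2 * t" by linarith
  qed
qed

end


lemma quad_scale: "(a *\<^sub>R (u::real^'n)) \<bullet> ((M::real^'n^'n) *v (a *\<^sub>R u)) = a^2 * (u \<bullet> (M *v u))"
  by (simp add: matrix_vector_mult_scaleR power2_eq_square)

lemma quad_addmat: "(z::real^'n) \<bullet> (((M::real^'n^'n) + e *\<^sub>R N) *v z) = z \<bullet> (M *v z) + e * (z \<bullet> (N *v z))"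
proof -
  have "(e *\<^sub>R N) *v z = e *\<^sub>R (N *v z)"
    by (simp add: vec_eq_iff matrix_vector_mult_def sum_distrib_left mult.assoc)
  then show ?thesis by (simp add: matrix_vector_mult_add_rdistrib inner_add_right)
qed

lemma cont_quad: "continuous_on X (\<lambda>z::real^'n. z \<bullet> ((M::real^'n^'n) *v z))"
  by (intro continuous_intros matrix_vector_mult_linear_continuous_on[THEN continuous_on_subset]) auto

lemma pd_perturb:
  fixes M N :: "real^'n^'n"
  assumes "pd M" "symm N"
  shows "\<exists>\<epsilon>>0. \<forall>e. \<bar>e\<bar> < \<epsilon> \<longrightarrow> psd (M + e *\<^sub>R N)"
proof -
  define Sph where "Sph = sphere (0::real^'n) 1"
  have cS: "compact Sph" unfolding Sph_def by simp
  obtain i :: 'n where True by simp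
  have neS: "Sph \<noteq> {}" unfolding Sph_def using norm_axis_1[of i] by (auto intro!: exI[of _ "axis i 1"])
  obtain u0 where u0: "u0 \<in> Sph" "\<forall>z\<in>Sph. u0 \<bullet> (M *v u0) \<le> z \<bullet> (M *v z)"
    using continuous_attains_inf[OF cS neS cont_quad] by blast
  obtain u1 where u1: "u1 \<in> Sph" "\<forall>z\<in>Sph. \<bar>z \<bullet> (N *v z)\<bar> \<le> \<bar>u1 \<bullet> (N *v u1)\<bar>"
    using continuous_attains_sup[OF cS neS continuous_on_rabs[OF cont_quad]] by blast
  define m where "m = u0 \<bullet> (M *v u0)"
  define K where "K = \<bar>u1 \<bullet> (N *v u1)\<bar>"
  have "u0 \<noteq> 0" using u0(1) unfolding Sph_def by auto
  then have m0: "m > 0" unfolding m_def using assms(1) unfolding pd_def by auto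
  have K0: "K \<ge> 0" unfolding K_def by simp
  show ?thesis
  proof (intro exI conjI allI impI)
    show "m / (K + 1) > 0" using m0 K0 by simp
    fix e :: real assume e: "\<bar>e\<bar> < m / (K + 1)"
    have eK: "\<bar>e\<bar> * K \<le> m"
    proof -
      have "\<bar>e\<bar> * K \<le> \<bar>e\<bar> * (K + 1)" by (simp add: mult_left_mono)
      also have "\<dots> \<le> m" using e K0 by (simp add: field_simps)
      finally show ?thesis .
    qed
    show "psd (M + e *\<^sub>R N)" unfolding psd_def
    proof
      show "symm (M + e *\<^sub>R N)" using assms unfolding pd_def symm_iff by simp
      show "\<forall>z. 0 \<le> z \<bullet> ((M + e *\<^sub>R N) *v z)"
      proof
        fix z :: "real^'n"
        show "0 \<le> z \<bullet> ((M + e *\<^sub>R N) *v z)"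
        proof (cases "z = 0")
          case True then show ?thesis by simp
        next
          case False
          define u where "u = (1 / norm z) *\<^sub>R z"
          have uS: "u \<in> Sph" unfolding u_def Sph_def using False by simp
          have zu: "z = norm z *\<^sub>R u" unfolding u_def using False by simp
          have "m \<le> u \<bullet> (M *v u)" using u0(2) uS unfolding m_def by blast
          moreover have "\<bar>u \<bullet> (N *v u)\<bar> \<le> K" using u1(2) uS unfolding K_def by blast
          then have "\<bar>e * (u \<bullet> (N *v u))\<bar> \<le> \<bar>e\<bar> * K" by (simp add: abs_mult mult_left_mono)
          ultimately have "0 \<le> u \<bullet> ((M + e *\<^sub>R N) *v u)" unfolding quad_addmat using eK by linarith
          then have "0 \<le> (norm z)^2 * (u \<bullet> ((M + e *\<^sub>R N) *v u))" by simp
          then show ?thesis using zu quad_scale by metis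
        qed
      qed
    qed
  qed
qed

context qc begin

lemma Agam_axis: "Agam A0 A (g + e *\<^sub>R axis i 1) = Agam A0 A g + e *\<^sub>R A i"
proof -
  have "(g + e *\<^sub>R axis i 1)$k *\<^sub>R A k = g$k *\<^sub>R A k + (if k = i then e *\<^sub>R A k else 0)" for k
    by (simp add: axis_def scaleR_add_left)
  then have "(\<Sum>k\<in>UNIV. (g + e *\<^sub>R axis i 1)$k *\<^sub>R A k) = (\<Sum>k\<in>UNIV. g$k *\<^sub>R A k) + (\<Sum>k\<in>UNIV. (if k = i then e *\<^sub>R A k else 0))"
    by (simp add: sum.distrib)
  then show ?thesis unfolding Agam_def by (simp add: add.assoc)
qed

lemma fq_axis: "fq (g + e *\<^sub>R axis i 1) x = fq g x + e * qf (A i) (b i) (c i) x"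
  unfolding fq_def by (simp add: inner_add_right inner_commute[of _ "axis i 1"] axis_inner Lv_def)

lemma symm_Ag: "symm (Agam A0 A g)" using symm_Agam symA0 symA by blast

lemma definite_case:
  assumes p: "(x, t) \<in> S" and g: "g \<in> Z (x, t)" and pdg: "pd (Agam A0 A g)"
  shows "(x, t) \<in> DD A0 b0 c0 A b c I"
proof -
  obtain \<epsilon> where eps: "\<epsilon> > 0" "\<forall>e i. \<bar>e\<bar> < \<epsilon> \<longrightarrow> psd (Agam A0 A g + e *\<^sub>R A i)"
  proof -
    have "\<forall>i. \<exists>\<epsilon>>0. \<forall>e. \<bar>e\<bar> < \<epsilon> \<longrightarrow> psd (Agam A0 A g + e *\<^sub>R A i)"
      using pd_perturb[OF pdg] symA by blast
    then obtain ep where ep: "\<forall>i. ep i > 0 \<and> (\<forall>e. \<bar>e\<bar> < ep i \<longrightarrow> psd (Agam A0 A g + e *\<^sub>R A i))" by metis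
    define \<epsilon> where "\<epsilon> = Min (range ep)"
    have "\<epsilon> > 0" unfolding \<epsilon>_def using ep by simp
    moreover have "\<epsilon> \<le> ep i" for i unfolding \<epsilon>_def by simp
    ultimately have "\<forall>e i. \<bar>e\<bar> < \<epsilon> \<longrightarrow> psd (Agam A0 A g + e *\<^sub>R A i)"
      using ep by (meson less_le_trans)
    then show ?thesis using that \<open>\<epsilon> > 0\<close> by blast
  qed
  have gG: "g \<in> G" and fg: "fq g x = 2 * t" using g unfolding Z_def by auto
  have Sx: "fq h x \<le> 2 * t" if "h \<in> G" for h using p that unfolding S_def by auto
  have mem: "g + e *\<^sub>R axis i 1 \<in> G" if "\<bar>e\<bar> < \<epsilon>" "i \<in> I \<longrightarrow> 0 \<le> g$i + e" for e i
  proof -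
    have "psd (Agam A0 A (g + e *\<^sub>R axis i 1))" unfolding Agam_axis using eps that by blast
    moreover have "\<forall>k\<in>I. 0 \<le> (g + e *\<^sub>R axis i 1)$k" using gG that unfolding Gam_def by (auto simp: axis_def)
    ultimately show ?thesis unfolding Gam_def by blast
  qed
  have ineq: "e * qf (A i) (b i) (c i) x \<le> 0" if "\<bar>e\<bar> < \<epsilon>" "i \<in> I \<longrightarrow> 0 \<le> g$i + e" for e i
    using Sx[OF mem[OF that]] fg unfolding fq_axis by simp
  have e2: "\<bar>\<epsilon>/2\<bar> < \<epsilon>" "\<bar>-\<epsilon>/2\<bar> < \<epsilon>" using eps by auto
  have le: "qf (A i) (b i) (c i) x \<le> 0" for i
  proof -
    have "i \<in> I \<longrightarrow> 0 \<le> g$i + \<epsilon>/2" using gG eps unfolding Gam_def by auto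
    then have "(\<epsilon>/2) * qf (A i) (b i) (c i) x \<le> 0" using ineq e2 by blast
    then show ?thesis using eps by (simp add: mult_le_0_iff)
  qed
  have eq: "qf (A i) (b i) (c i) x = 0" if "i \<notin> I \<or> g$i > 0" for i
  proof -
    define e where "e = (if i \<in> I then - min (\<epsilon>/2) (g$i) else - \<epsilon>/2)"
    have "\<bar>e\<bar> < \<epsilon> \<and> (i \<in> I \<longrightarrow> 0 \<le> g$i + e) \<and> e < 0"
    proof (cases "i \<in> I")
      case True then have "g$i > 0" using that by simp
      then show ?thesis using eps by (auto simp: e_def)
    next
      case False
      then show ?thesis using eps by (auto simp: e_def)
    qed
    then have "e * qf (A i) (b i) (c i) x \<le> 0" "e < 0" using ineq by auto
    then show ?thesis using le[of i] by (simp add: mult_le_0_iff)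
  qed
  have "g$k * qf (A k) (b k) (c k) x = 0" for k
  proof (cases "k \<notin> I \<or> g$k > 0")
    case True then show ?thesis using eq by simp
  next
    case False
    then have "g$k = 0" using gG unfolding Gam_def by force
    then show ?thesis by simp
  qed
  then have "(\<Sum>k\<in>UNIV. g$k * qf (A k) (b k) (c k) x) = 0" by (intro sum.neutral) blast
  then have "qf A0 b0 c0 x = 2 * t" using fg unfolding fq_def Lv_inner by simp
  moreover have "qfeas A b c I x" unfolding qfeas_def using le eq by blast
  ultimately show ?thesis unfolding DD_def by simp
qed

end


context qc begin

lemma fq_line: "fq g (x + s *\<^sub>R v) = fq g x
   + s * (x \<bullet> (Agam A0 A g *v v) + v \<bullet> (Agam A0 A g *v x) + 2 * (bgam b0 b g \<bullet> v))
   + s^2 * (v \<bullet> (Agam A0 A g *v v))"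
  unfolding fq_agg qf_line ..

lemma fq_F:
  assumes "g \<in> Z (x, t)" "Agam A0 A g *v v = 0" "bgam b0 b g \<bullet> v = \<kappa>"
  shows "fq g (x + s *\<^sub>R v) = 2 * (t + s * \<kappa>)"
proof -
  have "v \<bullet> (Agam A0 A g *v x) = x \<bullet> (Agam A0 A g *v v)" using symm_swap[OF symm_Ag] .
  then show ?thesis using assms unfolding fq_line Z_def by (simp add: algebra_simps)
qed

lemma cont_fq: "continuous_on UNIV (\<lambda>s. fq g (x + s *\<^sub>R v))"
  unfolding fq_line by (intro continuous_intros)

lemma cont_Lv: "continuous_on UNIV (\<lambda>s. Lv (x + s *\<^sub>R v) \<bullet> \<tau>)"
proof -
  have eq: "(\<lambda>s. Lv (x + s *\<^sub>R v) \<bullet> \<tau>) = (\<lambda>s. fq \<tau> (x + s *\<^sub>R v) - qf A0 b0 c0 (x + s *\<^sub>R v))"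
    unfolding fq_def by simp
  have cc: "continuous_on UNIV (\<lambda>s. fq \<tau> (x + s *\<^sub>R v) - qf A0 b0 c0 (x + s *\<^sub>R v))"
    unfolding qf_line fq_line by (intro continuous_intros)
  show ?thesis by (subst eq) (rule cc)
qed

lemma fq_add: "fq (g + h) y = fq g y + Lv y \<bullet> h"
  unfolding fq_def by (simp add: inner_add_right)

lemma fq_scale_add: "fq (g + \<mu> *\<^sub>R h) y = fq g y + \<mu> * (Lv y \<bullet> h)"
  unfolding fq_def by (simp add: inner_add_right)

end

locale qc2 = qc +
  assumes polyG: "polyhedron (Gam A0 A I)"
    and gstar: "\<exists>g. (\<forall>i\<in>I. 0 \<le> g$i) \<and> pd (Agam A0 A g)"
begin

lemma gstarG: obtains gs where "gs \<in> G" "pd (Agam A0 A gs)"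
proof -
  obtain g where g: "\<forall>i\<in>I. 0 \<le> g$i" "pd (Agam A0 A g)" using gstar by blast
  then have "psd (Agam A0 A g)" unfolding pd_def psd_def by (metis inner_zero_left less_eq_real_def)
  then show ?thesis using that g unfolding Gam_def by blast
qed

lemma G_ne: "G \<noteq> {}" using gstarG by blast

lemma convG: "convex G" using polyG by (rule polyhedron_imp_convex)

lemma cond_char: "\<exists>U T. finite U \<and> finite T \<and> U \<noteq> {} \<and> U \<subseteq> G \<and>
   (\<forall>g\<in>G. \<forall>\<tau>\<in>T. \<forall>\<mu>\<ge>0. g + \<mu> *\<^sub>R \<tau> \<in> G) \<and>
   (\<forall>y r. (y, r) \<in> S \<longleftrightarrow> (\<forall>u\<in>U. fq u y \<le> 2 * r) \<and> (\<forall>\<tau>\<in>T. Lv y \<bullet> \<tau> \<le> 0))"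
proof -
  obtain U T where UT: "finite U" "finite T" "U \<noteq> {}" "U \<subseteq> G"
     "\<forall>g\<in>G. \<forall>\<tau>\<in>T. \<forall>\<mu>\<ge>0. g + \<mu> *\<^sub>R \<tau> \<in> G"
     "\<forall>g\<in>G. \<exists>u\<in>convex hull U. \<exists>w\<in>convex_cone hull T. g = u + w"
    using decomp[OF polyG G_ne] by blast
  have "(y, r) \<in> S \<longleftrightarrow> (\<forall>u\<in>U. fq u y \<le> 2 * r) \<and> (\<forall>\<tau>\<in>T. Lv y \<bullet> \<tau> \<le> 0)" for y r
  proof
    assume yr: "(y, r) \<in> S"
    then have Sy: "\<forall>g\<in>G. fq g y \<le> 2 * r" unfolding S_def by simp
    have "\<forall>\<tau>\<in>T. Lv y \<bullet> \<tau> \<le> 0"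
    proof (intro ballI, rule ccontr)
      fix \<tau> assume \<tau>: "\<tau> \<in> T" and "\<not> Lv y \<bullet> \<tau> \<le> 0"
      then have pos: "Lv y \<bullet> \<tau> > 0" by simp
      obtain g0 where g0: "g0 \<in> G" using G_ne by blast
      define \<mu> where "\<mu> = (2 * r - fq g0 y + 1) / (Lv y \<bullet> \<tau>)"
      have "\<mu> \<ge> 0" unfolding \<mu>_def using pos Sy g0 by simp
      then have "g0 + \<mu> *\<^sub>R \<tau> \<in> G" using UT(5) g0 \<tau> by blast
      then have "fq (g0 + \<mu> *\<^sub>R \<tau>) y \<le> 2 * r" using Sy by blast
      moreover have "fq (g0 + \<mu> *\<^sub>R \<tau>) y = 2 * r + 1" unfolding fq_scale_add \<mu>_def using pos by simp
      ultimately show False by simp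
    qed
    then show "(\<forall>u\<in>U. fq u y \<le> 2 * r) \<and> (\<forall>\<tau>\<in>T. Lv y \<bullet> \<tau> \<le> 0)" using Sy UT(4) by blast
  next
    assume h: "(\<forall>u\<in>U. fq u y \<le> 2 * r) \<and> (\<forall>\<tau>\<in>T. Lv y \<bullet> \<tau> \<le> 0)"
    have "fq g y \<le> 2 * r" if "g \<in> G" for g
    proof -
      have "(qf A0 b0 c0 y - 2 * r) + Lv y \<bullet> g \<le> 0"
        by (rule affine_le0[OF UT(6)]) (use h that in \<open>auto simp: fq_def\<close>)
      then show ?thesis unfolding fq_def by simp
    qed
    then show "(y, r) \<in> S" unfolding S_def by simp
  qed
  then show ?thesis using UT by blast
qed

lemma Z_face: "p \<in> S \<Longrightarrow> Z p face_of G"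
proof -
  assume p: "p \<in> S"
  have "Z p = G \<inter> {g. Lv (fst p) \<bullet> g = 2 * snd p - qf A0 b0 c0 (fst p)}"
    unfolding Z_def fq_def by auto
  moreover have "\<And>g. g \<in> G \<Longrightarrow> Lv (fst p) \<bullet> g \<le> 2 * snd p - qf A0 b0 c0 (fst p)"
    using p unfolding S_def fq_def by auto
  ultimately show ?thesis using face_of_Int_supporting_hyperplane_le[OF convG] by simp
qed

lemma lowering:
  assumes "(x, t) \<in> S"
  shows "\<exists>\<delta>\<ge>0. (x, t - \<delta>) \<in> S \<and> Z (x, t - \<delta>) \<noteq> {}"
proof -
  obtain U T where UT: "finite U" "U \<noteq> {}" "U \<subseteq> G"
    "\<forall>y r. (y, r) \<in> S \<longleftrightarrow> (\<forall>u\<in>U. fq u y \<le> 2 * r) \<and> (\<forall>\<tau>\<in>T. Lv y \<bullet> \<tau> \<le> 0)"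
    using cond_char by blast
  define m where "m = Max ((\<lambda>u. fq u x) ` U)"
  obtain us where us: "us \<in> U" "fq us x = m" unfolding m_def using UT(1,2)
    by (metis (no_types, lifting) Max_in finite_imageI image_iff image_is_empty)
  have mle: "fq u x \<le> m" if "u \<in> U" for u unfolding m_def using UT(1) that by simp
  have m2: "m \<le> 2 * t" using assms UT(4) us by blast
  define \<delta> where "\<delta> = t - m / 2"
  show ?thesis
  proof (intro exI conjI)
    show "\<delta> \<ge> 0" unfolding \<delta>_def using m2 by simp
    show "(x, t - \<delta>) \<in> S" unfolding UT(4) using assms UT(4) mle by (auto simp: \<delta>_def)
    have "us \<in> Z (x, t - \<delta>)" unfolding Z_def using us UT(3) by (auto simp: \<delta>_def)
    then show "Z (x, t - \<delta>) \<noteq> {}" by blast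
  qed
qed

end


lemma ev_right_neg:
  fixes h :: "real \<Rightarrow> real"
  assumes "continuous_on UNIV h" "h s1 < 0"
  shows "eventually (\<lambda>s. h s < 0) (at_right s1)"
proof -
  have "isCont h s1" using assms(1) continuous_on_eq_continuous_at[OF open_UNIV] by blast
  then have "(h \<longlongrightarrow> h s1) (at s1)" by (simp add: isCont_def)
  then have "(h \<longlongrightarrow> h s1) (at_right s1)" by (rule tendsto_mono[OF at_le[OF subset_UNIV]])
  then show ?thesis using assms(2) by (rule order_tendstoD(2))
qed

context qc2 begin

lemma line_step:
  assumes p: "(x, t) \<in> S" and Fne: "Z (x, t) \<noteq> {}" and v0: "v \<noteq> 0"
    and hv: "\<forall>g\<in>Z (x, t). Agam A0 A g *v v = 0 \<and> bgam b0 b g \<bullet> v = \<kappa>"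
  shows "\<exists>s>0. (x + s *\<^sub>R v, t + s * \<kappa>) \<in> S \<and> Z (x, t) \<subset> Z (x + s *\<^sub>R v, t + s * \<kappa>)"
proof -
  obtain U T where UT: "finite U" "finite T" "U \<subseteq> G"
    "\<forall>g\<in>G. \<forall>\<tau>\<in>T. \<forall>\<mu>\<ge>0. g + \<mu> *\<^sub>R \<tau> \<in> G"
    "\<forall>y r. (y, r) \<in> S \<longleftrightarrow> (\<forall>u\<in>U. fq u y \<le> 2 * r) \<and> (\<forall>\<tau>\<in>T. Lv y \<bullet> \<tau> \<le> 0)"
    using cond_char by blast
  obtain gs where gs: "gs \<in> G" "pd (Agam A0 A gs)" using gstarG by blast
  define F where "F = Z (x, t)"
  define X where "X s = x + s *\<^sub>R v" for s
  define Tt where "Tt s = t + s * \<kappa>" for s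
  have FZ: "fq g (X s) = 2 * Tt s" if "g \<in> F" for g s
    unfolding X_def Tt_def using fq_F[of g x t v \<kappa> s] that hv F_def by blast
  have FsubZ: "F \<subseteq> Z (X s, Tt s)" for s
    using FZ unfolding Z_def F_def by auto
  define J where "J = {s. 0 \<le> s \<and> (X s, Tt s) \<in> S}"
  have Jeq: "J = {s. 0 \<le> s} \<inter> (\<Inter>u\<in>U. {s. fq u (X s) \<le> 2 * Tt s}) \<inter> (\<Inter>\<tau>\<in>T. {s. Lv (X s) \<bullet> \<tau> \<le> 0})"
    using UT(5) by (auto simp: J_def)
  have cfq: "continuous_on UNIV (\<lambda>s. fq g (X s))" for g unfolding X_def by (rule cont_fq)
  have cLv: "continuous_on UNIV (\<lambda>s. Lv (X s) \<bullet> \<tau>)" for \<tau> unfolding X_def by (rule cont_Lv)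
  have cT: "continuous_on UNIV (\<lambda>s. 2 * Tt s)" unfolding Tt_def by (intro continuous_intros)
  have closedJ: "closed J" unfolding Jeq
    by (intro closed_Int closed_INT ballI closed_Collect_le cfq cLv cT continuous_intros)
  define \<beta> where "\<beta> = v \<bullet> (Agam A0 A gs *v v)"
  define a where "a = x \<bullet> (Agam A0 A gs *v v) + v \<bullet> (Agam A0 A gs *v x) + 2 * (bgam b0 b gs \<bullet> v) - 2 * \<kappa>"
  define C where "C = fq gs x - 2 * t"
  have b0: "\<beta> > 0" unfolding \<beta>_def using gs(2) v0 unfolding pd_def by blast
  define Bd where "Bd = max 1 ((\<bar>C\<bar> + \<bar>a\<bar>) / \<beta>)"
  have Jbd: "s \<le> Bd" if "s \<in> J" for s
  proof -
    have "fq gs (X s) \<le> 2 * Tt s" using that gs(1) unfolding J_def S_def by auto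
    then have ineq: "C + s * a + s^2 * \<beta> \<le> 0"
      unfolding X_def Tt_def fq_line C_def a_def \<beta>_def by (simp add: algebra_simps)
    show ?thesis
    proof (cases "s \<le> 1")
      case True then show ?thesis unfolding Bd_def by simp
    next
      case False
      then have s1: "s > 1" by simp
      have "s * (s * \<beta>) \<le> - C - s * a" using ineq by (simp add: power2_eq_square algebra_simps)
      also have "\<dots> \<le> \<bar>C\<bar> + s * \<bar>a\<bar>" using s1
        by (smt (verit, best) abs_ge_self abs_minus_cancel abs_mult abs_of_pos minus_mult_right)
      also have "\<dots> \<le> s * (\<bar>C\<bar> + \<bar>a\<bar>)" using s1
      proof -
        have "\<bar>C\<bar> * 1 \<le> \<bar>C\<bar> * s" using s1 by (intro mult_left_mono) auto
        then show ?thesis by (simp add: distrib_left mult.commute)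
      qed
      finally have "s * \<beta> \<le> \<bar>C\<bar> + \<bar>a\<bar>" using s1 by (simp add: mult_le_cancel_left_pos)
      then have "s \<le> (\<bar>C\<bar> + \<bar>a\<bar>) / \<beta>" using b0 by (simp add: pos_le_divide_eq)
      then show ?thesis unfolding Bd_def by simp
    qed
  qed
  have X0: "X 0 = x" "Tt 0 = t" unfolding X_def Tt_def by simp_all
  have J0: "0 \<in> J" unfolding J_def using X0 p by simp
  have bddJ: "bdd_above J" using Jbd by (rule bdd_aboveI)
  define s1 where "s1 = Sup J"
  have s1J: "s1 \<in> J" unfolding s1_def using J0 bddJ closedJ closed_contains_Sup by blast
  have Zne: "Z (X s1, Tt s1) \<noteq> F"
  proof
    assume eqZ: "Z (X s1, Tt s1) = F"
    have s1S: "(X s1, Tt s1) \<in> S" using s1J unfolding J_def by simp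
    have evu: "\<forall>u\<in>U. eventually (\<lambda>s. fq u (X s) \<le> 2 * Tt s) (at_right s1)"
    proof
      fix u assume u: "u \<in> U"
      show "eventually (\<lambda>s. fq u (X s) \<le> 2 * Tt s) (at_right s1)"
      proof (cases "fq u (X s1) = 2 * Tt s1")
        case True
        then have "u \<in> F" using eqZ u UT(3) unfolding Z_def by auto
        then show ?thesis using FZ by simp
      next
        case False
        then have "fq u (X s1) - 2 * Tt s1 < 0" using s1S UT(5) u by fastforce
        then have "eventually (\<lambda>s. fq u (X s) - 2 * Tt s < 0) (at_right s1)"
          by (intro ev_right_neg continuous_on_diff cfq cT)
        then show ?thesis by (rule eventually_mono) simp
      qed
    qed
    obtain g0 where g0: "g0 \<in> F" using Fne F_def by blast
    have g0G: "g0 \<in> G" using g0 unfolding F_def Z_def by simp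
    have evt: "\<forall>\<tau>\<in>T. eventually (\<lambda>s. Lv (X s) \<bullet> \<tau> \<le> 0) (at_right s1)"
    proof
      fix \<tau> assume \<tau>: "\<tau> \<in> T"
      show "eventually (\<lambda>s. Lv (X s) \<bullet> \<tau> \<le> 0) (at_right s1)"
      proof (cases "Lv (X s1) \<bullet> \<tau> = 0")
        case True
        have "g0 + 1 *\<^sub>R \<tau> \<in> G" using UT(4) g0G \<tau> zero_le_one by blast
        then have gt: "g0 + \<tau> \<in> G" by simp
        have "fq (g0 + \<tau>) (X s1) = 2 * Tt s1" unfolding fq_add using True FZ[OF g0] by simp
        then have "g0 + \<tau> \<in> F" using eqZ gt unfolding Z_def by auto
        then have "Lv (X s) \<bullet> \<tau> = 0" for s using FZ[of "g0 + \<tau>" s] FZ[OF g0, of s] unfolding fq_add by simp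
        then show ?thesis by simp
      next
        case False
        then have "Lv (X s1) \<bullet> \<tau> < 0" using s1S UT(5) \<tau> by fastforce
        then have "eventually (\<lambda>s. Lv (X s) \<bullet> \<tau> < 0) (at_right s1)"
          by (intro ev_right_neg cLv)
        then show ?thesis by (rule eventually_mono) simp
      qed
    qed
    have "eventually (\<lambda>s. (X s, Tt s) \<in> S) (at_right s1)"
      using eventually_conj[OF eventually_ball_finite[OF UT(1) evu] eventually_ball_finite[OF UT(2) evt]]
      by (rule eventually_mono) (simp add: UT(5))
    then obtain bb where bb: "bb > s1" "\<forall>y>s1. y < bb \<longrightarrow> (X y, Tt y) \<in> S"
      unfolding eventually_at_right_field by blast
    define y where "y = (s1 + bb) / 2"
    have "y > s1" "y < bb" using bb(1) unfolding y_def by simp_all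
    moreover have "s1 \<ge> 0" using s1J unfolding J_def by simp
    ultimately have "y \<in> J" using bb(2) unfolding J_def by simp
    then have "y \<le> s1" unfolding s1_def using bddJ by (rule cSup_upper)
    then show False using \<open>y > s1\<close> by simp
  qed
  have s1pos: "s1 > 0"
  proof -
    have "s1 \<ge> 0" using s1J unfolding J_def by simp
    moreover have "s1 \<noteq> 0" using Zne X0 F_def by auto
    ultimately show ?thesis by simp
  qed
  show ?thesis
  proof (intro exI conjI)
    show "s1 > 0" by (rule s1pos)
    show "(x + s1 *\<^sub>R v, t + s1 * \<kappa>) \<in> S" using s1J unfolding J_def X_def Tt_def by simp
    show "Z (x, t) \<subset> Z (x + s1 *\<^sub>R v, t + s1 * \<kappa>)"
      using FsubZ[of s1] Zne unfolding F_def X_def Tt_def by blast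
  qed
qed

end


lemma subspace_VF: "subspace (VF A0 A F)"
  unfolding subspace_def VF_def
  by (simp add: matrix_vector_right_distrib matrix_vector_mult_scaleR)

lemma exists_v:
  assumes Fne: "F \<noteq> {}" and dimh: "int (dim (VF A0 A F)) \<ge> aff_dim (bgam b0 b ` F) + 1"
  shows "\<exists>v \<kappa>. v \<noteq> 0 \<and> v \<in> VF A0 A F \<and> (\<forall>g\<in>F. bgam b0 b g \<bullet> v = \<kappa>)"
proof -
  obtain g0 where g0: "g0 \<in> F" using Fne by blast
  define B0 where "B0 = bgam b0 b g0"
  define W where "W = (\<lambda>y. y - B0) ` (bgam b0 b ` F)"
  have "B0 \<in> affine hull (bgam b0 b ` F)" unfolding B0_def using g0 by (simp add: hull_inc)
  then have adW: "aff_dim (bgam b0 b ` F) = int (dim W)" unfolding W_def by (rule aff_dim_eq_dim_subtract)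
  define V where "V = VF A0 A F"
  have subV: "subspace V" unfolding V_def by (rule subspace_VF)
  have ex: "\<exists>v\<in>V. v \<noteq> 0 \<and> (\<forall>w\<in>W. w \<bullet> v = 0)"
  proof (rule ccontr)
    assume nex: "\<not> (\<exists>v\<in>V. v \<noteq> 0 \<and> (\<forall>w\<in>W. w \<bullet> v = 0))"
    obtain B where B: "B \<subseteq> W" "independent B" "W \<subseteq> span B" "card B = dim W"
      by (rule basis_exists)
    have finB: "finite B" using B(2) by (rule independent_imp_finite)
    define \<phi> where "\<phi> v = (\<Sum>w\<in>B. (w \<bullet> v) *\<^sub>R w)" for v
    have lin: "linear \<phi>"
    proof (rule linearI)
      show "\<phi> (x + y) = \<phi> x + \<phi> y" for x y
        unfolding \<phi>_def by (simp only: inner_add_right scaleR_add_left sum.distrib)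
      show "\<phi> (r *\<^sub>R x) = r *\<^sub>R \<phi> x" for r x
        unfolding \<phi>_def scaleR_right.sum by (simp only: inner_scaleR_right scaleR_scaleR)
    qed
    have inj: "inj_on \<phi> (span V)"
    proof (rule inj_onI)
      fix x y assume x: "x \<in> span V" and y: "y \<in> span V" and e: "\<phi> x = \<phi> y"
      have spV: "span V = V" using subV by (simp only: span_eq_iff)
      have xyV: "x - y \<in> V" using x y subV unfolding spV by (metis subspace_diff)
      have "\<phi> (x - y) = 0" using e lin by (simp add: linear_diff)
      then have "(x - y) \<bullet> \<phi> (x - y) = 0" by simp
      then have "(\<Sum>w\<in>B. (w \<bullet> (x - y))^2) = 0"
        unfolding \<phi>_def by (simp add: inner_sum_right power2_eq_square inner_commute)
      then have z: "\<forall>w\<in>B. w \<bullet> (x - y) = 0" using finB by (simp add: sum_nonneg_eq_0_iff)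
      have "\<forall>w\<in>W. w \<bullet> (x - y) = 0"
      proof
        fix w assume "w \<in> W"
        then have "w \<in> span B" using B(3) by blast
        moreover have "\<And>u. u \<in> B \<Longrightarrow> orthogonal (x - y) u" using z by (simp add: orthogonal_def inner_commute)
        ultimately have "orthogonal (x - y) w" by (rule orthogonal_to_span)
        then show "w \<bullet> (x - y) = 0" by (simp add: orthogonal_def inner_commute)
      qed
      then have "x - y = 0" using nex xyV by blast
      then show "x = y" by simp
    qed
    have "dim (\<phi> ` V) = dim V" using lin inj by (rule dim_image_eq)
    moreover have "\<phi> ` V \<subseteq> span B"
    proof
      fix z assume "z \<in> \<phi> ` V"
      then obtain v where "z = \<phi> v" by blast
      have "(\<Sum>w\<in>B. (w \<bullet> v) *\<^sub>R w) \<in> span B"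
        by (rule span_sum) (rule span_scale, rule span_base)
      then show "z \<in> span B" using \<open>z = \<phi> v\<close> \<phi>_def by simp
    qed
    then have "dim (\<phi> ` V) \<le> dim (span B)" by (rule dim_subset)
    moreover have "dim (span B) = card B" using B(2) by (rule dim_span_eq_card_independent)
    ultimately have "dim V \<le> dim W" using B(4) by simp
    then show False using dimh adW unfolding V_def by simp
  qed
  then obtain v where v: "v \<in> V" "v \<noteq> 0" "\<forall>w\<in>W. w \<bullet> v = 0" by blast
  have "\<forall>g\<in>F. bgam b0 b g \<bullet> v = B0 \<bullet> v"
  proof
    fix g assume "g \<in> F"
    then have "bgam b0 b g - B0 \<in> W" unfolding W_def by blast
    then have "(bgam b0 b g - B0) \<bullet> v = 0" using v(3) by blast
    then show "bgam b0 b g \<bullet> v = B0 \<bullet> v" by (simp add: inner_diff_left)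
  qed
  then show ?thesis using v V_def by blast
qed


locale qc3 = qc2 +
  assumes faces: "\<forall>F. semidef_face A0 A I F \<longrightarrow> int (dim (VF A0 A F)) \<ge> aff_dim (bgam b0 b ` F) + 1"
begin

abbreviation DDD where "DDD \<equiv> DD A0 b0 c0 A b c I"

lemma up_closed:
  assumes "(x, t) \<in> convex hull DDD" "\<delta> \<ge> 0"
  shows "(x, t + \<delta>) \<in> convex hull DDD"
proof -
  have sub: "(+) (0, \<delta>) ` DDD \<subseteq> DDD"
    using assms(2) unfolding DD_def by auto
  have "(0, \<delta>) + (x, t) \<in> (+) (0, \<delta>) ` (convex hull DDD)" using assms(1) by blast
  also have "\<dots> = convex hull ((+) (0, \<delta>) ` DDD)" by (rule convex_hull_translation[symmetric])
  also have "\<dots> \<subseteq> convex hull DDD" using sub by (rule hull_mono)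
  finally show ?thesis by (simp add: add.commute)
qed

lemma measure_lt:
  assumes "p \<in> S" "q \<in> S" "Z p \<subset> Z q"
  shows "nat (aff_dim G - aff_dim (Z q)) < nat (aff_dim G - aff_dim (Z p))"
proof -
  have fp: "Z p face_of G" and fq': "Z q face_of G" using assms Z_face by auto
  have "Z p face_of Z q" using face_of_subset[OF fp] assms(3) fq' face_of_imp_subset by blast
  then have "aff_dim (Z p) < aff_dim (Z q)"
    using face_of_aff_dim_lt[OF face_of_imp_convex[OF fq']] assms(3) by blast
  moreover have "aff_dim (Z q) \<le> aff_dim G" using fq' face_of_imp_subset aff_dim_subset by blast
  ultimately show ?thesis by simp
qed

lemma S_sub_aux:
  "\<forall>p. p \<in> S \<and> nat (aff_dim G - aff_dim (Z p)) = n \<longrightarrow> p \<in> convex hull DDD"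
proof (induction n rule: less_induct)
  case (less n)
  show ?case
  proof (intro allI impI)
    fix p assume pn: "p \<in> S \<and> nat (aff_dim G - aff_dim (Z p)) = n"
    obtain x t where pxt: "p = (x, t)" by (cases p)
    have pS: "(x, t) \<in> S" using pn pxt by simp
    have IH: "q \<in> S \<Longrightarrow> Z (x, t) \<subset> Z q \<Longrightarrow> q \<in> convex hull DDD" for q
      using less measure_lt[OF pS] pn pxt by blast
    show "p \<in> convex hull DDD"
    proof (cases "Z (x, t) = {}")
      case True
      obtain \<delta> where d: "\<delta> \<ge> 0" "(x, t - \<delta>) \<in> S" "Z (x, t - \<delta>) \<noteq> {}"
        using lowering[OF pS] by blast
      have "Z (x, t) \<subset> Z (x, t - \<delta>)" using True d(3) by auto
      then have "(x, t - \<delta>) \<in> convex hull DDD" by (rule IH[OF d(2)])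
      then have "(x, t - \<delta> + \<delta>) \<in> convex hull DDD" using d(1) by (rule up_closed)
      then show ?thesis using pxt by simp
    next
      case Fne: False
      show ?thesis
      proof (cases "\<exists>g\<in>Z (x, t). pd (Agam A0 A g)")
        case True
        then obtain g where "g \<in> Z (x, t)" "pd (Agam A0 A g)" by blast
        then have "(x, t) \<in> DDD" using definite_case[OF pS] by blast
        then show ?thesis using pxt by (simp add: hull_inc)
      next
        case False
        have "semidef_face A0 A I (Z (x, t))"
          unfolding semidef_face_def by (simp only: Z_face[OF pS] Fne False simp_thms)
        then have "int (dim (VF A0 A (Z (x, t)))) \<ge> aff_dim (bgam b0 b ` Z (x, t)) + 1"
          using faces by blast
        from exists_v[OF Fne this] obtain v \<kappa> where v: "v \<noteq> 0" "v \<in> VF A0 A (Z (x, t))" "\<forall>g\<in>Z (x, t). bgam b0 b g \<bullet> v = \<kappa>"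
          by blast
        have hv: "\<forall>g\<in>Z (x, t). Agam A0 A g *v v = 0 \<and> bgam b0 b g \<bullet> v = \<kappa>"
          using v unfolding VF_def by blast
        have hv': "\<forall>g\<in>Z (x, t). Agam A0 A g *v (-v) = 0 \<and> bgam b0 b g \<bullet> (-v) = -\<kappa>"
        proof -
          have "M *v (-w) = -(M *v w)" for M :: "real^'a^'a" and w
            by (simp add: vec_eq_iff matrix_vector_mult_def sum_negf)
          then show ?thesis using hv by simp
        qed
        obtain s1 where s1: "s1 > 0" "(x + s1 *\<^sub>R v, t + s1 * \<kappa>) \<in> S"
            "Z (x, t) \<subset> Z (x + s1 *\<^sub>R v, t + s1 * \<kappa>)"
          using line_step[OF pS Fne v(1) hv] by blast
        obtain s2 where s2: "s2 > 0" "(x + s2 *\<^sub>R (-v), t + s2 * (-\<kappa>)) \<in> S"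
            "Z (x, t) \<subset> Z (x + s2 *\<^sub>R (-v), t + s2 * (-\<kappa>))"
          using line_step[OF pS Fne _ hv'] v(1) by auto
        have m1: "(x + s1 *\<^sub>R v, t + s1 * \<kappa>) \<in> convex hull DDD" by (rule IH[OF s1(2) s1(3)])
        have m2: "(x + s2 *\<^sub>R (-v), t + s2 * (-\<kappa>)) \<in> convex hull DDD" by (rule IH[OF s2(2) s2(3)])
        define u where "u = s2 / (s1 + s2)"
        have u01: "0 \<le> u" "u \<le> 1" using s1(1) s2(1) by (auto simp: u_def)
        have "u *\<^sub>R (x + s1 *\<^sub>R v, t + s1 * \<kappa>) + (1 - u) *\<^sub>R (x + s2 *\<^sub>R (-v), t + s2 * (-\<kappa>))
              \<in> convex hull DDD"
          by (rule convexD[OF convex_convex_hull m1 m2]) (use u01 in auto)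
        moreover have "u *\<^sub>R (x + s1 *\<^sub>R v, t + s1 * \<kappa>) + (1 - u) *\<^sub>R (x + s2 *\<^sub>R (-v), t + s2 * (-\<kappa>)) = (x, t)"
        proof -
          have e1: "1 - u = s1 / (s1 + s2)" using s1(1) s2(1) by (simp add: u_def field_simps)
          have ex: "u *\<^sub>R (x + s1 *\<^sub>R v) + (1 - u) *\<^sub>R (x + s2 *\<^sub>R (-v)) = x"
          proof -
            have "u *\<^sub>R (x + s1 *\<^sub>R v) + (1 - u) *\<^sub>R (x + s2 *\<^sub>R (-v))
                = (u + (1 - u)) *\<^sub>R x + (u * s1 - (1 - u) * s2) *\<^sub>R v"
              by (simp add: algebra_simps)
            also have "u * s1 - (1 - u) * s2 = 0" unfolding e1 by (simp add: u_def field_simps)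
            finally show ?thesis by simp
          qed
          have et: "u * (t + s1 * \<kappa>) + (1 - u) * (t + s2 * (-\<kappa>)) = t"
          proof -
            have "u * (t + s1 * \<kappa>) + (1 - u) * (t + s2 * (-\<kappa>)) = t + (u * s1 - (1 - u) * s2) * \<kappa>"
              by (simp add: algebra_simps)
            also have "u * s1 - (1 - u) * s2 = 0" unfolding e1 by (simp add: u_def field_simps)
            finally show ?thesis by simp
          qed
          show ?thesis using ex et by simp
        qed
        ultimately show ?thesis using pxt by simp
      qed
    qed
  qed
qed

lemma S_sub: "S \<subseteq> convex hull DDD"
  using S_sub_aux by blast

end


lemma symm_blk: "symm X \<Longrightarrow> symm (blk c bb X)"
  unfolding symm_iff blk_def by (auto split: option.splits)

lemma psd_comb:
  fixes Y1 Y2 :: "real^'k^'k"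
  assumes "psd Y1" "psd Y2" "0 \<le> u" "u \<le> 1"
  shows "psd (u *\<^sub>R Y1 + (1 - u) *\<^sub>R Y2)"
  unfolding psd_def
proof
  show "symm (u *\<^sub>R Y1 + (1 - u) *\<^sub>R Y2)" using assms unfolding psd_def symm_iff by simp
  show "\<forall>z. 0 \<le> z \<bullet> ((u *\<^sub>R Y1 + (1 - u) *\<^sub>R Y2) *v z)"
  proof
    fix z :: "real^'k"
    have sc: "(a *\<^sub>R M) *v z = a *\<^sub>R (M *v z)" for a and M :: "real^'k^'k"
      by (simp add: vec_eq_iff matrix_vector_mult_def sum_distrib_left mult.assoc)
    have "z \<bullet> ((u *\<^sub>R Y1 + (1 - u) *\<^sub>R Y2) *v z) = u * (z \<bullet> (Y1 *v z)) + (1 - u) * (z \<bullet> (Y2 *v z))"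
      by (simp add: matrix_vector_mult_add_rdistrib sc inner_add_right)
    moreover have "0 \<le> z \<bullet> (Y1 *v z)" "0 \<le> z \<bullet> (Y2 *v z)" using assms unfolding psd_def by auto
    ultimately show "0 \<le> z \<bullet> ((u *\<^sub>R Y1 + (1 - u) *\<^sub>R Y2) *v z)" using assms by simp
  qed
qed

lemma frob_comb: "frob M (u *\<^sub>R Y1 + v *\<^sub>R Y2) = u * frob M Y1 + v * frob M Y2"
  unfolding frob_def by (simp add: algebra_simps sum.distrib sum_distrib_left)

lemma blk_comb: "blk 1 (u *\<^sub>R x1 + (1 - u) *\<^sub>R x2) (u *\<^sub>R X1 + (1 - u) *\<^sub>R X2)
   = u *\<^sub>R blk 1 x1 X1 + (1 - u) *\<^sub>R blk 1 x2 X2"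
  unfolding blk_def by (auto simp: vec_eq_iff algebra_simps split: option.splits)

lemma psd_rank1: "psd (blk 1 x (outer x))"
  unfolding psd_def
proof
  show "symm (blk 1 x (outer x))" by (rule symm_blk) (simp add: symm_iff outer_def mult.commute)
  show "\<forall>w. 0 \<le> w \<bullet> (blk 1 x (outer x) *v w)"
  proof
    fix w :: "real^'a option"
    have "w \<bullet> (blk 1 x (outer x) *v w) = (w$None + x \<bullet> (\<chi> j. w$(Some j)))^2"
      unfolding quad_blk quad_outer by (simp add: power2_eq_square algebra_simps)
    then show "0 \<le> w \<bullet> (blk 1 x (outer x) *v w)" by simp
  qed
qed

lemma frob_rank1: "frob (blk cc bb M) (blk 1 x (outer x)) = qf M bb cc x"
  unfolding frob_blk frob_outer qf_def by simp

lemma D_sub_DSDP: "DD A0 b0 c0 A b c I \<subseteq> DSDP A0 b0 c0 A b c I"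
proof
  fix p assume "p \<in> DD A0 b0 c0 A b c I"
  then obtain x t where p: "p = (x, t)" "qf A0 b0 c0 x \<le> 2 * t" "qfeas A b c I x" unfolding DD_def by auto
  have "sdpfeas A b c I x (outer x)"
    unfolding sdpfeas_def frob_rank1 using p(3) psd_rank1
    by (auto simp: qfeas_def symm_iff outer_def mult.commute)
  moreover have "frob (blk c0 b0 A0) (blk 1 x (outer x)) \<le> 2 * t" unfolding frob_rank1 by (rule p(2))
  ultimately show "p \<in> DSDP A0 b0 c0 A b c I" unfolding DSDP_def p(1) by blast
qed

lemma convex_DSDP: "convex (DSDP A0 b0 c0 A b c I)"
proof (rule convexI)
  fix p1 p2 and u v :: real
  assume p1: "p1 \<in> DSDP A0 b0 c0 A b c I" and p2: "p2 \<in> DSDP A0 b0 c0 A b c I" and u0: "0 \<le> u" and v0: "0 \<le> v" and uv: "u + v = 1"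
  have u: "0 \<le> u \<and> u \<le> 1" and vu: "v = 1 - u" using u0 v0 uv by auto
  obtain x1 t1 X1 where P1: "p1 = (x1, t1)" "sdpfeas A b c I x1 X1" "frob (blk c0 b0 A0) (blk 1 x1 X1) \<le> 2 * t1"
    using p1 unfolding DSDP_def by auto
  obtain x2 t2 X2 where P2: "p2 = (x2, t2)" "sdpfeas A b c I x2 X2" "frob (blk c0 b0 A0) (blk 1 x2 X2) \<le> 2 * t2"
    using p2 unfolding DSDP_def by auto
  define x where "x = u *\<^sub>R x1 + (1 - u) *\<^sub>R x2"
  define X where "X = u *\<^sub>R X1 + (1 - u) *\<^sub>R X2"
  define t where "t = u * t1 + (1 - u) * t2"
  have Y: "blk 1 x X = u *\<^sub>R blk 1 x1 X1 + (1 - u) *\<^sub>R blk 1 x2 X2" unfolding x_def X_def by (rule blk_comb)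
  have fr: "frob M (blk 1 x X) = u * frob M (blk 1 x1 X1) + (1 - u) * frob M (blk 1 x2 X2)" for M
    unfolding Y frob_comb ..
  have "sdpfeas A b c I x X"
    unfolding sdpfeas_def
  proof (intro conjI ballI allI impI)
    show "symm X" using P1(2) P2(2) unfolding sdpfeas_def X_def symm_iff by simp
    show "psd (blk 1 x X)" unfolding Y using P1(2) P2(2) u unfolding sdpfeas_def by (intro psd_comb) auto
    fix i
    { assume "i \<in> I"
      then have "frob (blk (c i) (b i) (A i)) (blk 1 x1 X1) \<le> 0" "frob (blk (c i) (b i) (A i)) (blk 1 x2 X2) \<le> 0"
        using P1(2) P2(2) unfolding sdpfeas_def by auto
      then show "frob (blk (c i) (b i) (A i)) (blk 1 x X) \<le> 0" unfolding fr using u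
        by (simp add: add_nonpos_nonpos mult_nonneg_nonpos) }
    { assume "i \<notin> I"
      then show "frob (blk (c i) (b i) (A i)) (blk 1 x X) = 0" unfolding fr
        using P1(2) P2(2) unfolding sdpfeas_def by auto }
  qed
  moreover have "frob (blk c0 b0 A0) (blk 1 x X) \<le> 2 * t"
  proof -
    have "u * frob (blk c0 b0 A0) (blk 1 x1 X1) \<le> u * (2 * t1)" using P1(3) u by (simp add: mult_left_mono)
    moreover have "(1 - u) * frob (blk c0 b0 A0) (blk 1 x2 X2) \<le> (1 - u) * (2 * t2)" using P2(3) u by (simp add: mult_left_mono)
    ultimately show ?thesis unfolding fr t_def by (simp add: algebra_simps)
  qed
  ultimately have "(x, t) \<in> DSDP A0 b0 c0 A b c I" unfolding DSDP_def by auto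
  moreover have "u *\<^sub>R p1 + (1 - u) *\<^sub>R p2 = (x, t)" unfolding P1(1) P2(1) x_def t_def by simp
  ultimately show "u *\<^sub>R p1 + v *\<^sub>R p2 \<in> DSDP A0 b0 c0 A b c I" using vu by simp
qed

lemma hull_snd:
  fixes D :: "('a::real_inner \<times> real) set"
  assumes "p \<in> convex hull D"
  shows "\<exists>d\<in>D. snd d \<le> snd p"
proof (rule ccontr)
  assume "\<not> (\<exists>d\<in>D. snd d \<le> snd p)"
  then have "D \<subseteq> {y. snd p < snd y}" by auto
  moreover have eq: "{y::'a\<times>real. snd p < snd y} = {y. snd p < (0::'a, 1::real) \<bullet> y}" by (auto simp: inner_Pair_0)
  have "convex {y::'a\<times>real. snd p < snd y}" unfolding eq by (rule convex_halfspace_gt)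
  ultimately have "convex hull D \<subseteq> {y. snd p < snd y}" by (rule hull_minimal)
  then show False using assms by auto
qed


theorem mainTheorem7:
  fixes A0 :: "real^'n^'n" and b0 :: "real^'n" and c0 :: real
    and A :: "'m::finite \<Rightarrow> real^'n^'n" and b :: "'m \<Rightarrow> real^'n" and c :: "'m \<Rightarrow> real"
    and I :: "'m set"
  assumes symA0: "symm A0" and symA: "\<forall>i. symm (A i)"
    and assmA_feas: "\<exists>x. qfeas A b c I x"
    and assmA_def: "\<exists>g. (\<forall>i\<in>I. 0 \<le> g$i) \<and> pd (Agam A0 A g)"
    and assmC: "polyhedron (Gam A0 A I)"
    and faces: "\<forall>F. semidef_face A0 A I F \<longrightarrow>
                  int (dim (VF A0 A F)) \<ge> aff_dim (bgam b0 b ` F) + 1"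
  shows "convex hull (DD A0 b0 c0 A b c I) = DSDP A0 b0 c0 A b c I
         \<and> Opt A0 b0 c0 A b c I = OptSDP A0 b0 c0 A b c I"
proof -
  interpret qc3 A0 b0 c0 A b c I
    by unfold_locales (use symA0 symA assmC assmA_def faces in auto)
  have conv: "convex hull (DD A0 b0 c0 A b c I) = DSDP A0 b0 c0 A b c I"
  proof
    show "convex hull (DD A0 b0 c0 A b c I) \<subseteq> DSDP A0 b0 c0 A b c I"
      using D_sub_DSDP convex_DSDP by (rule hull_minimal)
    show "DSDP A0 b0 c0 A b c I \<subseteq> convex hull (DD A0 b0 c0 A b c I)"
      using DSDP_sub_S S_sub by blast
  qed
  have le1: "OptSDP A0 b0 c0 A b c I \<le> Opt A0 b0 c0 A b c I"
    unfolding Opt_def OptSDP_def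
  proof (rule Inf_mono)
    fix y assume "y \<in> {ereal (qf A0 b0 c0 x) | x. qfeas A b c I x}"
    then obtain x where x: "y = ereal (qf A0 b0 c0 x)" "qfeas A b c I x" by blast
    have "sdpfeas A b c I x (outer x)"
      unfolding sdpfeas_def frob_rank1 using x(2) psd_rank1
      by (auto simp: qfeas_def symm_iff outer_def mult.commute)
    then have "ereal (frob (blk c0 b0 A0) (blk 1 x (outer x))) \<in> {ereal (frob (blk c0 b0 A0) (blk 1 x X)) | x X. sdpfeas A b c I x X}"
      by blast
    moreover have "ereal (frob (blk c0 b0 A0) (blk 1 x (outer x))) \<le> y" unfolding frob_rank1 x(1) by simp
    ultimately show "\<exists>z\<in>{ereal (frob (blk c0 b0 A0) (blk 1 x X)) | x X. sdpfeas A b c I x X}. z \<le> y" by blast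
  qed
  have le2: "Opt A0 b0 c0 A b c I \<le> OptSDP A0 b0 c0 A b c I"
    unfolding Opt_def OptSDP_def
  proof (rule Inf_mono)
    fix y assume "y \<in> {ereal (frob (blk c0 b0 A0) (blk 1 x X)) | x X. sdpfeas A b c I x X}"
    then obtain x X where xX: "y = ereal (frob (blk c0 b0 A0) (blk 1 x X))" "sdpfeas A b c I x X" by blast
    define v where "v = frob (blk c0 b0 A0) (blk 1 x X)"
    have "(x, v / 2) \<in> DSDP A0 b0 c0 A b c I" unfolding DSDP_def v_def using xX(2) by auto
    then have "(x, v / 2) \<in> convex hull (DD A0 b0 c0 A b c I)" using conv by simp
    then obtain d where d: "d \<in> DD A0 b0 c0 A b c I" "snd d \<le> v / 2" using hull_snd by fastforce
    obtain x' t' where dd: "d = (x', t')" by (cases d)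
    have "qf A0 b0 c0 x' \<le> 2 * t'" "qfeas A b c I x'" using d(1) dd unfolding DD_def by auto
    moreover have "t' \<le> v / 2" using d(2) dd by simp
    ultimately have "ereal (qf A0 b0 c0 x') \<le> y" unfolding xX(1) v_def[symmetric] by simp
    then show "\<exists>z\<in>{ereal (qf A0 b0 c0 x) | x. qfeas A b c I x}. z \<le> y" using \<open>qfeas A b c I x'\<close> by blast
  qed
  show ?thesis using conv le1 le2 by simp
qed


end
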